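(* Let $E$ and $X$ be Banach spaces. Then there exists an ultrafilter $\mathcal{U}$ (on some index set $I$) such that \[(E\widehat{\otimes} X^* )_\mathcal{U}/W_0\cong\mathcal{A}(E,X)^*,\] where $W_0=\left\{ (u_\alpha)_\mathcal{U}\in (E\widehat{\otimes} X^* )_\mathcal{U} : \lim_\mathcal{U}u_\alpha(T)=0 \text{ for all } T\in\mathcal{A}(E,X)\right\}$.
   Context: $\mathcal{A}(E,X)$ denotes the space of approximable operators from $E$ to $X$, i.e. the operator-norm closure of the space of bounded finite-rank operators $E\to X$. $E\widehat{\otimes} X^*$ is the projective tensor product. For $u=\sum_{i=1}^\infty a_i\otimes x_i^*\in E\widehat{\otimes} X^*$ and a bounded operator $T:E\to X$, $u(T)=\sum_{i=1}^\infty x_i^*(T(a_i))$. For a Banach space $Y$ and an ultrafilter $\mathcal U$ on an index set $I$, the ultrapower is $Y_\mathcal{U}=\ell^\infty(Y,I)/\{(y_\alpha): \lim_\mathcal{U}\|y_\alpha\|=0\}$ with norm $\|(y_\alpha)_\mathcal U\|=\lim_\mathcal U\|y_\alpha\|$, where $(y_\alpha)_\mathcal U$ denotes the class of the bounded family $(y_\alpha)$. The symbol $\cong$ denotes isometric isomorphism of Banach spaces. *)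

theory Defs
  imports "HOL-Analysis.Analysis"
begin

definition ultrafilter :: "'i filter \<Rightarrow> bool" where
  "ultrafilter U \<longleftrightarrow> U \<noteq> bot \<and> (\<forall>P. eventually P U \<or> eventually (\<lambda>x. \<not> P x) U)"

definition finite_rank :: "('e::real_normed_vector \<Rightarrow>\<^sub>L 'x::real_normed_vector) \<Rightarrow> bool" where
  "finite_rank T \<longleftrightarrow> (\<exists>S. finite S \<and> range (blinfun_apply T) \<subseteq> span S)"

definition approximable :: "('e::real_normed_vector \<Rightarrow>\<^sub>L 'x::real_normed_vector) set" where
  "approximable = closure {T. finite_rank T}"

text \<open>The dual A(E,X)^*: bounded linear functionals on the subspace A(E,X),
  represented by functions on all operators that vanish outside A(E,X).\<close>

definition approx_dual :: "(('e::real_normed_vector \<Rightarrow>\<^sub>L 'x::real_normed_vector) \<Rightarrow> real) set" where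
  "approx_dual = {\<phi>.
     (\<forall>T\<in>approximable. \<forall>S\<in>approximable. \<forall>s t. \<phi> (s *\<^sub>R T + t *\<^sub>R S) = s * \<phi> T + t * \<phi> S) \<and>
     (\<exists>K. \<forall>T\<in>approximable. \<bar>\<phi> T\<bar> \<le> K * norm T) \<and>
     (\<forall>T. T \<notin> approximable \<longrightarrow> \<phi> T = 0)}"

definition dual_norm :: "(('e::real_normed_vector \<Rightarrow>\<^sub>L 'x::real_normed_vector) \<Rightarrow> real) \<Rightarrow> real" where
  "dual_norm \<phi> = (SUP T\<in>(approximable \<inter> {T. norm T \<le> 1}). \<bar>\<phi> T\<bar>)"

text \<open>An element of E \<otimes>^ X^* is represented by an absolutely summable formal
  combination c of elementary tensors a \<otimes> f, i.e. u = \<Sum> c(a,f) a \<otimes> f with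
  \<Sum> |c(a,f)| \<parallel>a\<parallel> \<parallel>f\<parallel> < \<infinity>.  Its projective norm is computed by duality with
  the bounded bilinear forms of norm \<le> 1 on E \<times> X^* (the dual of E \<otimes>^ X^*);
  two representations give the same element iff their difference has norm 0.\<close>

type_synonym ('e, 'x) ptens = "'e \<times> ('x \<Rightarrow>\<^sub>L real) \<Rightarrow> real"

definition pt_rep :: "('e::real_normed_vector, 'x::real_normed_vector) ptens \<Rightarrow> bool" where
  "pt_rep c \<longleftrightarrow> (\<lambda>p. \<bar>c p\<bar> * (norm (fst p) * norm (snd p))) summable_on UNIV"

definition bil_ball :: "('e::real_normed_vector \<Rightarrow> ('x::real_normed_vector \<Rightarrow>\<^sub>L real) \<Rightarrow> real) set" where
  "bil_ball = {B. bounded_bilinear B \<and> (\<forall>a f. \<bar>B a f\<bar> \<le> norm a * norm f)}"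

definition pt_norm :: "('e::real_normed_vector, 'x::real_normed_vector) ptens \<Rightarrow> real" where
  "pt_norm c = (SUP B\<in>bil_ball. \<bar>\<Sum>\<^sub>\<infinity>p. c p * B (fst p) (snd p)\<bar>)"

definition pt_apply :: "('e::real_normed_vector, 'x::real_normed_vector) ptens \<Rightarrow> ('e \<Rightarrow>\<^sub>L 'x) \<Rightarrow> real" where
  "pt_apply c T = (\<Sum>\<^sub>\<infinity>p. c p * blinfun_apply (snd p) (blinfun_apply T (fst p)))"

text \<open>Bounded families (representatives of elements of the ultrapower).\<close>
definition up_fam :: "('i \<Rightarrow> ('e::real_normed_vector, 'x::real_normed_vector) ptens) set" where
  "up_fam = {v. (\<forall>\<alpha>. pt_rep (v \<alpha>)) \<and> bounded (range (\<lambda>\<alpha>. pt_norm (v \<alpha>)))}"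

definition up_norm :: "'i filter \<Rightarrow> ('i \<Rightarrow> ('e::real_normed_vector, 'x::real_normed_vector) ptens) \<Rightarrow> real" where
  "up_norm U v = Lim U (\<lambda>\<alpha>. pt_norm (v \<alpha>))"

definition W0 :: "'i filter \<Rightarrow> ('i \<Rightarrow> ('e::real_normed_vector, 'x::real_normed_vector) ptens) set" where
  "W0 U = {v \<in> up_fam. \<forall>T\<in>approximable. ((\<lambda>\<alpha>. pt_apply (v \<alpha>) T) \<longlongrightarrow> 0) U}"

definition quot_norm :: "'i filter \<Rightarrow> ('i \<Rightarrow> ('e::real_normed_vector, 'x::real_normed_vector) ptens) \<Rightarrow> real" where
  "quot_norm U v = Inf ((\<lambda>w. up_norm U (\<lambda>\<alpha> p. v \<alpha> p - w \<alpha> p)) ` W0 U)"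

text \<open>(E \<otimes>^ X^*)_U / W_0 \<cong> A(E,X)^*: there is a linear map \<Psi> from the bounded
  families onto A(E,X)^* whose kernel is exactly (the preimage of) W_0 and which
  carries the quotient norm to the dual norm.  This is exactly an isometric
  isomorphism of the quotient onto A(E,X)^*.\<close>
definition quot_iso_dual ::
  "'i filter \<Rightarrow> (('i \<Rightarrow> ('e::real_normed_vector, 'x::real_normed_vector) ptens) \<Rightarrow> (('e \<Rightarrow>\<^sub>L 'x) \<Rightarrow> real)) \<Rightarrow> bool" where
  "quot_iso_dual U \<Psi> \<longleftrightarrow>
     (\<forall>v\<in>up_fam. \<forall>w\<in>up_fam. \<forall>s t::real.
        \<Psi> (\<lambda>\<alpha> p. s * v \<alpha> p + t * w \<alpha> p) = (\<lambda>T. s * \<Psi> v T + t * \<Psi> w T)) \<and>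
     \<Psi> ` up_fam = approx_dual \<and>
     (\<forall>v\<in>up_fam. \<Psi> v = (\<lambda>_. 0) \<longleftrightarrow> v \<in> W0 U) \<and>
     (\<forall>v\<in>up_fam. dual_norm (\<Psi> v) = quot_norm U v)"

text \<open>A fixed index type, large enough to contain index sets of all sizes
  relevant for E and X (the informal statement quantifies over an arbitrary index set).\<close>
type_synonym ('e, 'x) idx =
  "((('e \<Rightarrow>\<^sub>L 'x) \<Rightarrow> real) + ((('x \<Rightarrow>\<^sub>L real) \<Rightarrow> real) + ('e, 'x) ptens)) set set"

end

theory Submission
  imports Defs "HOL-Library.Function_Algebras"
begin

definition hb_valid :: "(real \<Rightarrow> 'v::ab_group_add \<Rightarrow> 'v) \<Rightarrow> ('v \<Rightarrow> real) \<Rightarrow> ('v \<times> real) set \<Rightarrow> bool" where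
  "hb_valid scl p G \<longleftrightarrow> (0,0) \<in> G \<and> (\<forall>x a y b. (x,a)\<in>G \<longrightarrow> (y,b)\<in>G \<longrightarrow> (x+y,a+b)\<in>G)
     \<and> (\<forall>x a t. (x,a)\<in>G \<longrightarrow> (scl t x, t*a)\<in>G) \<and> (\<forall>x a. (x,a)\<in>G \<longrightarrow> a \<le> p x)"

lemma hb_extend:
  fixes p :: "'v::ab_group_add \<Rightarrow> real" and scl :: "real \<Rightarrow> 'v \<Rightarrow> 'v"
  assumes vs: "vector_space scl"
    and sub: "\<And>x y. p (x + y) \<le> p x + p y"
    and hom: "\<And>x t. t \<ge> 0 \<Longrightarrow> p (scl t x) = t * p x"
    and M: "hb_valid scl p M" and x: "\<not> (\<exists>a. (x,a) \<in> M)"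
  shows "\<exists>M'. hb_valid scl p M' \<and> M \<subseteq> M' \<and> M' \<noteq> M"
proof -
  interpret vector_space scl by fact
  have M0: "(0,0) \<in> M" and Madd: "\<And>x a y b. (x,a)\<in>M \<Longrightarrow> (y,b)\<in>M \<Longrightarrow> (x+y,a+b)\<in>M"
    and Msc: "\<And>x a t. (x,a)\<in>M \<Longrightarrow> (scl t x, t*a)\<in>M" and Mle: "\<And>x a. (x,a)\<in>M \<Longrightarrow> a \<le> p x"
    using M unfolding hb_valid_def by blast+
  define L where "L = {a - p (m - x) | m a. (m,a) \<in> M}"
  define c where "c = Sup L"
  have key: "a' - p (m' - x) \<le> p (m + x) - a" if "(m,a)\<in>M" "(m',a')\<in>M" for m a m' a'
  proof -
    have "a' + a \<le> p (m' + m)" using Madd[OF that(2,1)] Mle by blast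
    also have "m' + m = (m' - x) + (m + x)" by (simp add: algebra_simps)
    hence "p (m' + m) \<le> p (m' - x) + p (m + x)" by (metis sub)
    finally show ?thesis by simp
  qed
  have Lne: "L \<noteq> {}" using M0 unfolding L_def by blast
  have Lbdd: "bdd_above L" unfolding L_def bdd_above_def using key[OF M0] by blast
  have c_up: "c \<le> p (m + x) - a" if "(m,a)\<in>M" for m a
    unfolding c_def using Lne key[OF that] by (intro cSup_least) (auto simp: L_def)
  have c_lo: "a - p (m - x) \<le> c" if "(m,a)\<in>M" for m a
    unfolding c_def using Lbdd that by (intro cSup_upper) (auto simp: L_def)
  define M' where "M' = {(m + scl t x, a + t*c) | m a t. (m,a) \<in> M}"
  have M'v: "hb_valid scl p M'"
    unfolding hb_valid_def
  proof (intro conjI allI impI)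
    show "(0,0) \<in> M'" unfolding M'_def using M0
      by (auto intro!: exI[of _ 0] exI[of _ "0::real"])
  next
    fix y1 a1 y2 a2 assume "(y1,a1)\<in>M'" "(y2,a2)\<in>M'"
    then obtain m1 b1 t1 m2 b2 t2 where h: "(m1,b1)\<in>M" "(m2,b2)\<in>M" "y1 = m1 + scl t1 x" "a1 = b1 + t1*c"
      "y2 = m2 + scl t2 x" "a2 = b2 + t2*c" unfolding M'_def by blast
    have "y1 + y2 = (m1+m2) + scl (t1+t2) x" using h by (simp add: scale_left_distrib algebra_simps)
    moreover have "a1 + a2 = (b1+b2) + (t1+t2)*c" using h by (simp add: algebra_simps)
    ultimately show "(y1+y2, a1+a2) \<in> M'" unfolding M'_def using Madd[OF h(1,2)] by blast
  next
    fix y a s assume "(y,a)\<in>M'"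
    then obtain m b t where h: "(m,b)\<in>M" "y = m + scl t x" "a = b + t*c" unfolding M'_def by blast
    have "scl s y = scl s m + scl (s*t) x" using h by (simp add: scale_right_distrib)
    moreover have "s*a = s*b + (s*t)*c" using h by (simp add: algebra_simps)
    ultimately show "(scl s y, s*a) \<in> M'" unfolding M'_def using Msc[OF h(1)] by blast
  next
    fix y a assume "(y,a)\<in>M'"
    then obtain m b t where h: "(m,b)\<in>M" "y = m + scl t x" "a = b + t*c" unfolding M'_def by blast
    consider "t = 0" | "t > 0" | "t < 0" by linarith
    then show "a \<le> p y"
    proof cases
      case 1 then show ?thesis using h Mle by simp
    next
      case 2
      have "c \<le> p (scl (1/t) m + x) - (1/t)*b" using c_up[OF Msc[OF h(1)]] .
      hence "t*c \<le> t * (p (scl (1/t) m + x) - (1/t)*b)" using 2 by (simp add: mult_left_mono)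
      also have "\<dots> = t * p (scl (1/t) m + x) - b" using 2 by (simp add: algebra_simps)
      also have "t * p (scl (1/t) m + x) = p (scl t (scl (1/t) m + x))" using hom 2 by simp
      also have "scl t (scl (1/t) m + x) = y" using h 2 by (simp add: scale_right_distrib)
      finally show ?thesis using h by simp
    next
      case 3
      define s where "s = -t"
      have s: "s > 0" using 3 s_def by simp
      have "(1/s)*b - p (scl (1/s) m - x) \<le> c" using c_lo[OF Msc[OF h(1)]] .
      hence "b - s * p (scl (1/s) m - x) \<le> s*c" using s by (simp add: algebra_simps divide_simps)
      also have "s * p (scl (1/s) m - x) = p (scl s (scl (1/s) m - x))" using hom s by simp
      also have "scl s (scl (1/s) m - x) = y" using h s s_def by (simp add: scale_right_diff_distrib scale_minus_left)
      finally show ?thesis using h s_def by simp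
    qed
  qed
  have MM': "M \<subseteq> M'"
  proof
    fix z assume "z \<in> M"
    then obtain m a where "z = (m,a)" "(m,a)\<in>M" by (cases z) auto
    moreover have "(m + scl 0 x, a + 0*c) = (m,a)" by simp
    ultimately show "z \<in> M'" unfolding M'_def by (metis (mono_tags, lifting) mem_Collect_eq)
  qed
  have xc: "(x, c) \<in> M'"
  proof -
    have "(0 + scl 1 x, 0 + 1*c) = (x,c)" by simp
    then show ?thesis unfolding M'_def using M0 by (metis (mono_tags, lifting) mem_Collect_eq)
  qed
  have ne: "M' \<noteq> M" using x xc by auto
  show ?thesis by (rule exI[of _ M'], intro conjI M'v MM' ne)
qed

lemma hahn_banach:
  fixes p :: "'v::ab_group_add \<Rightarrow> real" and scl :: "real \<Rightarrow> 'v \<Rightarrow> 'v"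
  assumes vs: "vector_space scl"
    and sub: "\<And>x y. p (x + y) \<le> p x + p y"
    and hom: "\<And>x t. t \<ge> 0 \<Longrightarrow> p (scl t x) = t * p x"
  shows "\<exists>g. (\<forall>x y. g (x+y) = g x + g y) \<and> (\<forall>t x. g (scl t x) = t * g x) \<and> (\<forall>x. g x \<le> p x) \<and> g x0 = p x0"
proof -
  interpret vector_space scl by fact
  define G0 where "G0 = {(scl t x0, t * p x0) | t. True}"
  have p0: "p 0 = 0" using hom[of 0 0] by simp
  have G0v: "hb_valid scl p G0" unfolding hb_valid_def
  proof (intro conjI allI impI)
    show "(0,0)\<in>G0" unfolding G0_def by (auto intro!: exI[of _ 0])
  next
    fix x a y b assume "(x,a)\<in>G0" "(y,b)\<in>G0"
    then obtain s t where "x = scl s x0" "a = s * p x0" "y = scl t x0" "b = t * p x0" unfolding G0_def by blast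
    then show "(x+y,a+b)\<in>G0" unfolding G0_def
      by (auto intro!: exI[of _ "s+t"] simp: scale_left_distrib algebra_simps)
  next
    fix x a t assume "(x,a)\<in>G0"
    then obtain s where "x = scl s x0" "a = s * p x0" unfolding G0_def by blast
    then show "(scl t x, t*a)\<in>G0" unfolding G0_def by (auto intro!: exI[of _ "t * s"])
  next
    fix x a assume "(x,a)\<in>G0"
    then obtain s where h: "x = scl s x0" "a = s * p x0" unfolding G0_def by blast
    show "a \<le> p x"
    proof (cases "s \<ge> 0")
      case True then show ?thesis using h hom by simp
    next
      case False
      have "0 \<le> p x0 + p (- x0)" using sub[of x0 "-x0"] p0 by simp
      moreover have "p x = (-s) * p (-x0)" using h hom[of "-s" "-x0"] False by (simp add: scale_minus_left scale_minus_right)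
      moreover have "s * (p x0 + p (-x0)) \<le> 0" using False calculation(1) by (simp add: mult_nonpos_nonneg)
      ultimately show ?thesis using h(2) by (simp add: algebra_simps)
    qed
  qed
  define A where "A = {G. hb_valid scl p G \<and> G0 \<subseteq> G}"
  have "\<exists>M\<in>A. \<forall>X\<in>A. M \<subseteq> X \<longrightarrow> X = M"
  proof (rule Zorn_Lemma2, intro ballI)
    fix C assume C: "C \<in> chains A"
    show "\<exists>U\<in>A. \<forall>X\<in>C. X \<subseteq> U"
    proof (cases "C = {}")
      case True then show ?thesis using G0v A_def by blast
    next
      case False
      have CA: "C \<subseteq> A" and ch: "\<And>X Y. X\<in>C \<Longrightarrow> Y\<in>C \<Longrightarrow> X \<subseteq> Y \<or> Y \<subseteq> X"
        using C unfolding chains_def chain_subset_def by blast+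
      have v: "\<And>X. X\<in>C \<Longrightarrow> hb_valid scl p X" and g0: "\<And>X. X\<in>C \<Longrightarrow> G0 \<subseteq> X" using CA A_def by blast+
      have "hb_valid scl p (\<Union>C)" unfolding hb_valid_def
      proof (intro conjI allI impI)
        show "(0,0) \<in> \<Union>C" using False v unfolding hb_valid_def by blast
      next
        fix x a y b assume "(x,a)\<in>\<Union>C" "(y,b)\<in>\<Union>C"
        then obtain X Y where "X\<in>C" "Y\<in>C" "(x,a)\<in>X" "(y,b)\<in>Y" by blast
        then show "(x+y,a+b)\<in>\<Union>C" using ch v unfolding hb_valid_def by (metis UnionI subsetD)
      qed (use v in \<open>unfold hb_valid_def, blast+\<close>)
      then have "\<Union>C \<in> A" using False g0 A_def by blast
      then show ?thesis by blast
    qed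
  qed
  then obtain M where MA: "M\<in>A" and Mmax: "\<And>X. X\<in>A \<Longrightarrow> M \<subseteq> X \<Longrightarrow> X = M" by blast
  have Mv: "hb_valid scl p M" and G0M: "G0 \<subseteq> M" using MA A_def by blast+
  have tot: "\<exists>a. (x,a)\<in>M" for x
  proof (rule ccontr)
    assume "\<not> ?thesis"
    then obtain M' where "hb_valid scl p M'" "M \<subseteq> M'" "M' \<noteq> M" using hb_extend[OF vs sub hom Mv] by blast
    then show False using Mmax[of M'] G0M A_def by blast
  qed
  have uniq: "a = b" if "(x,a)\<in>M" "(x,b)\<in>M" for x a b
  proof -
    have "(scl (-1) x, -b) \<in> M" using Mv that(2) unfolding hb_valid_def by (metis mult_minus1)
    hence "(x + scl (-1) x, a - b) \<in> M" using Mv that(1) unfolding hb_valid_def by fastforce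
    hence "(0, a - b) \<in> M" by (simp add: scale_minus_left)
    hence "a - b \<le> 0" using Mv p0 unfolding hb_valid_def by fastforce
    have "(scl (-1) x, -a) \<in> M" using Mv that(1) unfolding hb_valid_def by (metis mult_minus1)
    hence "(x + scl (-1) x, b - a) \<in> M" using Mv that(2) unfolding hb_valid_def by fastforce
    hence "(0, b - a) \<in> M" by (simp add: scale_minus_left)
    hence "b - a \<le> 0" using Mv p0 unfolding hb_valid_def by fastforce
    with \<open>a - b \<le> 0\<close> show ?thesis by simp
  qed
  define g where "g x = (THE a. (x,a)\<in>M)" for x
  have gM: "(x, g x) \<in> M" for x unfolding g_def using tot uniq by (metis theI)
  have gI: "g x = a" if "(x,a)\<in>M" for x a using gM uniq that by blast
  show ?thesis
  proof (intro exI[of _ g] conjI allI)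
    fix x y show "g (x+y) = g x + g y" using Mv gM gI unfolding hb_valid_def by blast
  next
    fix t x show "g (scl t x) = t * g x" using Mv gM gI unfolding hb_valid_def by blast
  next
    fix x show "g x \<le> p x" using Mv gM unfolding hb_valid_def by blast
  next
    have "(x0, p x0) \<in> G0" unfolding G0_def by (auto intro!: exI[of _ 1])
    then show "g x0 = p x0" using gI G0M by blast
  qed
qed


lemma real_summable_cmp:
  fixes f g :: "'a \<Rightarrow> real"
  assumes g: "g summable_on A" and le: "\<And>x. x\<in>A \<Longrightarrow> \<bar>f x\<bar> \<le> g x"
  shows "f summable_on A"
proof -
  have "(\<lambda>x. norm (g x)) summable_on A"
    using g by (rule summable_on_cong[THEN iffD1, rotated]) (use le in force)
  then have "(\<lambda>x. norm (f x)) summable_on A"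
    by (rule Infinite_Sum.abs_summable_on_comparison_test) (use le in force)
  then show ?thesis using summable_on_iff_abs_summable_on_real by blast
qed

lemma real_infsum_abs_le:
  fixes f g :: "'a \<Rightarrow> real"
  assumes g: "g summable_on A" and le: "\<And>x. x\<in>A \<Longrightarrow> \<bar>f x\<bar> \<le> g x"
  shows "\<bar>infsum f A\<bar> \<le> infsum g A"
proof -
  have fs: "f summable_on A" using real_summable_cmp[OF assms] .
  have "(\<lambda>x. norm (f x)) summable_on A" using fs summable_on_iff_abs_summable_on_real by blast
  then have "norm (infsum f A) \<le> infsum (\<lambda>x. norm (f x)) A" by (rule norm_infsum_bound)
  also have "\<dots> \<le> infsum g A"
    using \<open>(\<lambda>x. norm (f x)) summable_on A\<close> g le by (intro infsum_mono) auto
  finally show ?thesis by simp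
qed

definition wn :: "('e::real_normed_vector, 'x::real_normed_vector) ptens \<Rightarrow> real" where
  "wn c = (\<Sum>\<^sub>\<infinity>p. \<bar>c p\<bar> * (norm (fst p) * norm (snd p)))"

lemma wn_nonneg: "wn c \<ge> 0"
  unfolding wn_def by (intro infsum_nonneg) auto

lemma ptrep_summable:
  fixes c :: "('e::real_normed_vector, 'x::real_normed_vector) ptens"
  assumes "pt_rep c" "\<And>a f. \<bar>B a f\<bar> \<le> K * (norm a * norm f)"
  shows "(\<lambda>p. c p * B (fst p) (snd p)) summable_on UNIV"
proof (rule real_summable_cmp)
  show "(\<lambda>p. K * (\<bar>c p\<bar> * (norm (fst p) * norm (snd p)))) summable_on UNIV"
    using assms(1) unfolding pt_rep_def by (intro summable_on_cmult_right)
  fix p :: "'e \<times> ('x \<Rightarrow>\<^sub>L real)"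
  have "\<bar>c p * B (fst p) (snd p)\<bar> = \<bar>c p\<bar> * \<bar>B (fst p) (snd p)\<bar>" by (simp add: abs_mult)
  also have "\<dots> \<le> \<bar>c p\<bar> * (K * (norm (fst p) * norm (snd p)))"
    using assms(2) by (intro mult_left_mono) auto
  finally show "\<bar>c p * B (fst p) (snd p)\<bar> \<le> K * (\<bar>c p\<bar> * (norm (fst p) * norm (snd p)))"
    by (simp add: algebra_simps)
qed

lemma ptrep_bound:
  fixes c :: "('e::real_normed_vector, 'x::real_normed_vector) ptens"
  assumes "pt_rep c" "\<And>a f. \<bar>B a f\<bar> \<le> K * (norm a * norm f)"
  shows "\<bar>\<Sum>\<^sub>\<infinity>p. c p * B (fst p) (snd p)\<bar> \<le> K * wn c"
proof -
  have "\<bar>\<Sum>\<^sub>\<infinity>p. c p * B (fst p) (snd p)\<bar> \<le> (\<Sum>\<^sub>\<infinity>p. K * (\<bar>c p\<bar> * (norm (fst p) * norm (snd p))))"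
  proof (rule real_infsum_abs_le)
    show "(\<lambda>p. K * (\<bar>c p\<bar> * (norm (fst p) * norm (snd p)))) summable_on UNIV"
      using assms(1) unfolding pt_rep_def by (intro summable_on_cmult_right)
    fix p :: "'e \<times> ('x \<Rightarrow>\<^sub>L real)"
    have "\<bar>c p * B (fst p) (snd p)\<bar> = \<bar>c p\<bar> * \<bar>B (fst p) (snd p)\<bar>" by (simp add: abs_mult)
    also have "\<dots> \<le> \<bar>c p\<bar> * (K * (norm (fst p) * norm (snd p)))"
      using assms(2) by (intro mult_left_mono) auto
    finally show "\<bar>c p * B (fst p) (snd p)\<bar> \<le> K * (\<bar>c p\<bar> * (norm (fst p) * norm (snd p)))"
      by (simp add: algebra_simps)
  qed
  also have "\<dots> = K * wn c" unfolding wn_def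
    using assms(1) unfolding pt_rep_def by (intro infsum_cmult_right) auto
  finally show ?thesis .
qed

lemma bil_ball_zero: "(\<lambda>a f. 0) \<in> bil_ball"
  unfolding bil_ball_def by (auto simp: bounded_bilinear_def intro: exI[of _ 0])

lemma pt_norm_bdd:
  assumes "pt_rep c"
  shows "bdd_above ((\<lambda>B. \<bar>\<Sum>\<^sub>\<infinity>p. c p * B (fst p) (snd p)\<bar>) ` bil_ball)"
  using ptrep_bound[OF assms, where K=1] unfolding bil_ball_def bdd_above_def by force

lemma pt_norm_ge:
  assumes "pt_rep c" "B \<in> bil_ball"
  shows "\<bar>\<Sum>\<^sub>\<infinity>p. c p * B (fst p) (snd p)\<bar> \<le> pt_norm c"
  unfolding pt_norm_def using pt_norm_bdd[OF assms(1)] assms(2) by (rule cSUP_upper2) auto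

lemma pt_norm_nonneg: "pt_rep c \<Longrightarrow> pt_norm c \<ge> 0"
  using pt_norm_ge[OF _ bil_ball_zero] by fastforce

lemma pt_norm_le_wn: "pt_rep c \<Longrightarrow> pt_norm c \<le> wn c"
  unfolding pt_norm_def using bil_ball_zero
  by (intro cSUP_least) (auto simp: bil_ball_def intro!: ptrep_bound[where K=1, simplified])

lemma op_bil:
  fixes T :: "'e::real_normed_vector \<Rightarrow>\<^sub>L 'x::real_normed_vector"
  assumes "T \<noteq> 0"
  shows "(\<lambda>a f. blinfun_apply f (blinfun_apply T a) / norm T) \<in> bil_ball"
proof -
  have nT: "norm T > 0" using assms by simp
  have le: "\<bar>blinfun_apply f (blinfun_apply T a)\<bar> \<le> norm T * (norm a * norm f)" for a f
  proof -
    have "\<bar>blinfun_apply f (blinfun_apply T a)\<bar> \<le> norm f * norm (blinfun_apply T a)"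
      using norm_blinfun[of f "blinfun_apply T a"] by simp
    also have "\<dots> \<le> norm f * (norm T * norm a)"
      by (intro mult_left_mono norm_blinfun) auto
    finally show ?thesis by (simp add: algebra_simps)
  qed
  have bb: "bounded_bilinear (\<lambda>a f. blinfun_apply f (blinfun_apply T a) / norm T)"
  proof (rule bounded_bilinear.intro)
    show "\<exists>K. \<forall>a b. norm (blinfun_apply b (blinfun_apply T a) / norm T) \<le> norm a * norm b * K"
      using le nT by (intro exI[of _ 1]) (auto simp: divide_simps algebra_simps)
  qed (auto simp: blinfun.bilinear_simps add_divide_distrib)
  show ?thesis unfolding bil_ball_def using bb le nT by (auto simp: divide_simps algebra_simps)
qed

lemma pt_apply_summable:
  assumes "pt_rep c"
  shows "(\<lambda>p. c p * blinfun_apply (snd p) (blinfun_apply T (fst p))) summable_on UNIV"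
proof -
  have le: "\<bar>blinfun_apply f (blinfun_apply T a)\<bar> \<le> norm T * (norm a * norm f)" for a f
  proof -
    have "\<bar>blinfun_apply f (blinfun_apply T a)\<bar> \<le> norm f * norm (blinfun_apply T a)"
      using norm_blinfun[of f "blinfun_apply T a"] by simp
    also have "\<dots> \<le> norm f * (norm T * norm a)"
      by (intro mult_left_mono norm_blinfun) auto
    finally show ?thesis by (simp add: algebra_simps)
  qed
  show ?thesis using ptrep_summable[OF assms le] by simp
qed

lemma pt_apply_bound:
  assumes "pt_rep c"
  shows "\<bar>pt_apply c T\<bar> \<le> pt_norm c * norm T"
proof (cases "T = 0")
  case True then show ?thesis by (simp add: pt_apply_def)
next
  case False
  have nT: "norm T > 0" using False by simp
  have "pt_apply c T / norm T = (\<Sum>\<^sub>\<infinity>p. c p * (blinfun_apply (snd p) (blinfun_apply T (fst p)) / norm T))"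
    unfolding pt_apply_def
    using infsum_cmult_left[of "1 / norm T" "\<lambda>p. c p * blinfun_apply (snd p) (blinfun_apply T (fst p))" UNIV]
      pt_apply_summable[OF assms, of T] by simp
  also have "\<bar>\<dots>\<bar> \<le> pt_norm c"
    using pt_norm_ge[OF assms op_bil[OF False]] by simp
  finally show ?thesis using nT by (simp add: divide_simps abs_divide)
qed

lemma pt_rep_lin:
  assumes "pt_rep c" "pt_rep d"
  shows "pt_rep (\<lambda>p. s * c p + t * d p)"
  unfolding pt_rep_def
proof (rule real_summable_cmp)
  show "(\<lambda>p. \<bar>s\<bar> * (\<bar>c p\<bar> * (norm (fst p) * norm (snd p))) + \<bar>t\<bar> * (\<bar>d p\<bar> * (norm (fst p) * norm (snd p)))) summable_on UNIV"
    using assms unfolding pt_rep_def by (intro summable_on_add summable_on_cmult_right)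
  fix p :: "'a \<times> ('b \<Rightarrow>\<^sub>L real)"
  have "\<bar>s * c p + t * d p\<bar> \<le> \<bar>s\<bar> * \<bar>c p\<bar> + \<bar>t\<bar> * \<bar>d p\<bar>"
    by (metis abs_mult abs_triangle_ineq)
  then have "\<bar>s * c p + t * d p\<bar> * (norm (fst p) * norm (snd p)) \<le> (\<bar>s\<bar> * \<bar>c p\<bar> + \<bar>t\<bar> * \<bar>d p\<bar>) * (norm (fst p) * norm (snd p))"
    by (intro mult_right_mono) auto
  then show "\<bar>\<bar>s * c p + t * d p\<bar> * (norm (fst p) * norm (snd p))\<bar> \<le> \<bar>s\<bar> * (\<bar>c p\<bar> * (norm (fst p) * norm (snd p))) + \<bar>t\<bar> * (\<bar>d p\<bar> * (norm (fst p) * norm (snd p)))"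
    by (simp add: algebra_simps)
qed

lemma pt_apply_lin:
  assumes "pt_rep c" "pt_rep d"
  shows "pt_apply (\<lambda>p. s * c p + t * d p) T = s * pt_apply c T + t * pt_apply d T"
proof -
  let ?g = "\<lambda>p. blinfun_apply (snd p) (blinfun_apply T (fst p))"
  have "pt_apply (\<lambda>p. s * c p + t * d p) T = (\<Sum>\<^sub>\<infinity>p. s * (c p * ?g p) + t * (d p * ?g p))"
    unfolding pt_apply_def by (simp add: algebra_simps)
  also have "\<dots> = (\<Sum>\<^sub>\<infinity>p. s * (c p * ?g p)) + (\<Sum>\<^sub>\<infinity>p. t * (d p * ?g p))"
    using pt_apply_summable[OF assms(1)] pt_apply_summable[OF assms(2)]
    by (intro infsum_add summable_on_cmult_right) auto
  also have "\<dots> = s * pt_apply c T + t * pt_apply d T"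
    unfolding pt_apply_def
    using pt_apply_summable[OF assms(1)] pt_apply_summable[OF assms(2)]
    by (simp add: infsum_cmult_right)
  finally show ?thesis .
qed

lemma pt_apply_diff:
  assumes "pt_rep c" "pt_rep d"
  shows "pt_apply (\<lambda>p. c p - d p) T = pt_apply c T - pt_apply d T"
  using pt_apply_lin[OF assms, of 1 "-1" T] by simp

lemma pt_rep_diff: "pt_rep c \<Longrightarrow> pt_rep d \<Longrightarrow> pt_rep (\<lambda>p. c p - d p)"
  using pt_rep_lin[of c d 1 "-1"] by simp

lemma pt_apply_linT:
  assumes "pt_rep c"
  shows "pt_apply c (s *\<^sub>R T + t *\<^sub>R S) = s * pt_apply c T + t * pt_apply c S"
proof -
  let ?g = "\<lambda>T p. blinfun_apply (snd p) (blinfun_apply T (fst p))"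
  have "pt_apply c (s *\<^sub>R T + t *\<^sub>R S) = (\<Sum>\<^sub>\<infinity>p. s * (c p * ?g T p) + t * (c p * ?g S p))"
    unfolding pt_apply_def by (simp add: blinfun.bilinear_simps algebra_simps)
  also have "\<dots> = (\<Sum>\<^sub>\<infinity>p. s * (c p * ?g T p)) + (\<Sum>\<^sub>\<infinity>p. t * (c p * ?g S p))"
    using pt_apply_summable[OF assms]
    by (intro infsum_add summable_on_cmult_right) auto
  also have "\<dots> = s * pt_apply c T + t * pt_apply c S"
    unfolding pt_apply_def using pt_apply_summable[OF assms]
    by (simp add: infsum_cmult_right)
  finally show ?thesis .
qed

lemma pt_norm_diff:
  fixes c d :: "('e::real_normed_vector, 'x::real_normed_vector) ptens"
  assumes "pt_rep c" "pt_rep d"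
  shows "pt_norm (\<lambda>p. c p - d p) \<le> pt_norm c + pt_norm d"
  unfolding pt_norm_def[of "\<lambda>p. c p - d p"]
proof (rule cSUP_least)
  show "bil_ball \<noteq> {}" using bil_ball_zero by blast
  fix B :: "'e \<Rightarrow> ('x \<Rightarrow>\<^sub>L real) \<Rightarrow> real" assume B: "B \<in> bil_ball"
  have K: "\<And>a f. \<bar>B a f\<bar> \<le> 1 * (norm a * norm f)" using B unfolding bil_ball_def by auto
  have "(\<Sum>\<^sub>\<infinity>p. (c p - d p) * B (fst p) (snd p)) = (\<Sum>\<^sub>\<infinity>p. c p * B (fst p) (snd p)) - (\<Sum>\<^sub>\<infinity>p. d p * B (fst p) (snd p))"
  proof -
    have "(\<Sum>\<^sub>\<infinity>p. (c p - d p) * B (fst p) (snd p)) = (\<Sum>\<^sub>\<infinity>p. c p * B (fst p) (snd p) + - (d p * B (fst p) (snd p)))"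
      by (simp add: algebra_simps)
    also have "\<dots> = (\<Sum>\<^sub>\<infinity>p. c p * B (fst p) (snd p)) + (\<Sum>\<^sub>\<infinity>p. - (d p * B (fst p) (snd p)))"
      using ptrep_summable[OF assms(1) K] ptrep_summable[OF assms(2) K]
      by (intro infsum_add summable_on_uminus[THEN iffD2]) auto
    finally show ?thesis by (simp add: infsum_uminus)
  qed
  then show "\<bar>\<Sum>\<^sub>\<infinity>p. (c p - d p) * B (fst p) (snd p)\<bar> \<le> pt_norm c + pt_norm d"
    using pt_norm_ge[OF assms(1) B] pt_norm_ge[OF assms(2) B] by linarith
qed

lemma fin_supp:
  fixes c :: "('e::real_normed_vector, 'x::real_normed_vector) ptens"
  assumes S: "finite S" and z: "\<And>p. p \<notin> S \<Longrightarrow> c p = 0"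
  shows "pt_rep c" "wn c = (\<Sum>p\<in>S. \<bar>c p\<bar> * (norm (fst p) * norm (snd p)))"
    "pt_apply c T = (\<Sum>p\<in>S. c p * blinfun_apply (snd p) (blinfun_apply T (fst p)))"
proof -
  have e1: "(\<Sum>\<^sub>\<infinity>p. \<bar>c p\<bar> * (norm (fst p) * norm (snd p))) = (\<Sum>\<^sub>\<infinity>p\<in>S. \<bar>c p\<bar> * (norm (fst p) * norm (snd p)))"
    by (rule infsum_cong_neutral) (auto simp: z)
  have "(\<lambda>p. \<bar>c p\<bar> * (norm (fst p) * norm (snd p))) summable_on UNIV"
    using summable_on_cong_neutral[of S UNIV "\<lambda>p. \<bar>c p\<bar> * (norm (fst p) * norm (snd p))" "\<lambda>p. \<bar>c p\<bar> * (norm (fst p) * norm (snd p))"] S z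
    by auto
  then show "pt_rep c" unfolding pt_rep_def .
  show "wn c = (\<Sum>p\<in>S. \<bar>c p\<bar> * (norm (fst p) * norm (snd p)))" unfolding wn_def e1 using S by simp
  have e2: "pt_apply c T = (\<Sum>\<^sub>\<infinity>p\<in>S. c p * blinfun_apply (snd p) (blinfun_apply T (fst p)))"
    unfolding pt_apply_def by (rule infsum_cong_neutral) (auto simp: z)
  show "pt_apply c T = (\<Sum>p\<in>S. c p * blinfun_apply (snd p) (blinfun_apply T (fst p)))" using e2 S by simp
qed


lemma norming:
  fixes x0 :: "'x::real_normed_vector"
  shows "\<exists>f::'x \<Rightarrow>\<^sub>L real. norm f \<le> 1 \<and> blinfun_apply f x0 = norm x0"
proof -
  have vs: "vector_space (scaleR :: real \<Rightarrow> 'x \<Rightarrow> 'x)" by unfold_locales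
  obtain g where add: "\<forall>x y. g (x+y) = g x + g y" and sc: "\<forall>t x. g (t *\<^sub>R x) = t * g x"
    and le: "\<forall>x. g x \<le> norm x" and gx: "g x0 = norm x0"
    using hahn_banach[OF vs, of norm x0] by (auto simp: norm_triangle_ineq)
  have ab: "\<bar>g x\<bar> \<le> norm x" for x
  proof -
    have "g (-x) = - g x" using sc[rule_format, of "-1" x] by simp
    then show ?thesis using le[rule_format, of x] le[rule_format, of "-x"] by simp
  qed
  have bl: "bounded_linear g"
    by (rule bounded_linear_intro[where K=1]) (use add sc ab in auto)
  show ?thesis
    by (intro exI[of _ "Blinfun g"] conjI norm_blinfun_bound)
       (use ab gx in \<open>auto simp: bounded_linear_Blinfun_apply[OF bl]\<close>)
qed

lemma ultra_exists:
  fixes F :: "'i filter"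
  assumes "F \<noteq> bot"
  shows "\<exists>U. ultrafilter U \<and> U \<le> F"
proof -
  define ev :: "'i filter \<Rightarrow> ('i \<Rightarrow> bool) set" where "ev G = {P. eventually P G}" for G
  define A' where "A' = {G. G \<noteq> bot \<and> G \<le> F}"
  define A where "A = ev ` A'"
  have evle: "ev G \<subseteq> ev H \<longleftrightarrow> H \<le> G" for G H unfolding ev_def le_filter_def by auto
  have "\<exists>M\<in>A. \<forall>X\<in>A. M \<subseteq> X \<longrightarrow> X = M"
  proof (rule Zorn_Lemma2, intro ballI)
    fix C assume C: "C \<in> chains A"
    show "\<exists>U\<in>A. \<forall>X\<in>C. X \<subseteq> U"
    proof (cases "C = {}")
      case True then show ?thesis using assms A_def A'_def by blast
    next
      case False
      have CA: "C \<subseteq> A" and ch: "\<And>X Y. X\<in>C \<Longrightarrow> Y\<in>C \<Longrightarrow> X \<subseteq> Y \<or> Y \<subseteq> X"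
        using C unfolding chains_def chain_subset_def by blast+
      define C' where "C' = {G\<in>A'. ev G \<in> C}"
      have C'ne: "C' \<noteq> {}" using False CA unfolding C'_def A_def by blast
      have dir: "\<And>a b. a\<in>C' \<Longrightarrow> b\<in>C' \<Longrightarrow> \<exists>x\<in>C'. x \<le> inf a b"
      proof -
        fix a b assume "a\<in>C'" "b\<in>C'"
        then have "ev a \<subseteq> ev b \<or> ev b \<subseteq> ev a" using ch C'_def by blast
        then show "\<exists>x\<in>C'. x \<le> inf a b" using \<open>a\<in>C'\<close> \<open>b\<in>C'\<close> evle
          by (metis inf.orderE inf_commute order_refl)
      qed
      define G where "G = Inf C'"
      have evG: "eventually P G \<longleftrightarrow> (\<exists>H\<in>C'. eventually P H)" for P
        unfolding G_def using eventually_Inf_base[OF C'ne dir] .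
      have "G \<noteq> bot"
      proof
        assume "G = bot"
        then have "eventually (\<lambda>_. False) G" by simp
        then obtain H where "H\<in>C'" "eventually (\<lambda>_. False) H" using evG by blast
        then show False using C'_def A'_def by (simp add: eventually_False)
      qed
      moreover have "G \<le> F"
      proof -
        obtain H where "H \<in> C'" using C'ne by blast
        then have "G \<le> H" unfolding G_def by (rule Inf_lower)
        moreover have "H \<le> F" using \<open>H \<in> C'\<close> C'_def A'_def by blast
        ultimately show ?thesis by (rule order_trans)
      qed
      ultimately have GA: "ev G \<in> A" unfolding A_def A'_def by blast
      have "\<forall>X\<in>C. X \<subseteq> ev G"
      proof
        fix X assume "X \<in> C"
        then obtain H where "H\<in>A'" "X = ev H" using CA A_def by blast
        then have "H \<in> C'" using \<open>X\<in>C\<close> C'_def by blast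
        then show "X \<subseteq> ev G" using \<open>X = ev H\<close> evG unfolding ev_def by blast
      qed
      then show ?thesis using GA by blast
    qed
  qed
  then obtain M where MA: "M \<in> A'" and max: "\<And>X. X \<in> A \<Longrightarrow> ev M \<subseteq> X \<Longrightarrow> X = ev M"
    unfolding A_def by blast
  have "ultrafilter M" unfolding ultrafilter_def
  proof (intro conjI allI)
    show "M \<noteq> bot" using MA A'_def by blast
  next
    fix P
    show "eventually P M \<or> eventually (\<lambda>x. \<not> P x) M"
    proof (rule ccontr)
      assume nn: "\<not> (eventually P M \<or> eventually (\<lambda>x. \<not> P x) M)"
      define G where "G = inf M (principal {x. P x})"
      have "G \<noteq> bot"
      proof
        assume "G = bot"
        then have "eventually (\<lambda>_. False) G" by simp
        then have "eventually (\<lambda>x. \<not> P x) M" unfolding G_def eventually_inf_principal by simp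
        then show False using nn by blast
      qed
      moreover have "G \<le> F"
      proof -
        have "G \<le> M" unfolding G_def by (rule inf_le1)
        moreover have "M \<le> F" using MA A'_def by blast
        ultimately show ?thesis by (rule order_trans)
      qed
      ultimately have "ev G \<in> A" unfolding A_def A'_def by blast
      moreover have "ev M \<subseteq> ev G" using evle G_def by simp
      ultimately have "ev G = ev M" using max by blast
      moreover have "P \<in> ev G" unfolding ev_def G_def eventually_inf_principal by simp
      ultimately show False using nn ev_def by auto
    qed
  qed
  then show ?thesis using MA A'_def by blast
qed

lemma ultra_conv:
  fixes f :: "'i \<Rightarrow> real"
  assumes U: "ultrafilter U" and b: "\<And>i. \<bar>f i\<bar> \<le> K"
  shows "\<exists>L. (f \<longlongrightarrow> L) U"
proof -
  have Ub: "U \<noteq> bot" using U ultrafilter_def by blast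
  have "compact {-K..K}" by simp
  moreover have "filtermap f U \<noteq> bot" using Ub filtermap_bot_iff by blast
  moreover have "eventually (\<lambda>x. x \<in> {-K..K}) (filtermap f U)"
    unfolding eventually_filtermap
  proof (intro always_eventually allI)
    fix i show "f i \<in> {-K..K}" using b[of i] by (simp add: abs_le_iff)
  qed
  ultimately obtain L where L: "inf (nhds L) (filtermap f U) \<noteq> bot"
    unfolding compact_filter by blast
  have "(f \<longlongrightarrow> L) U"
    unfolding tendsto_def
  proof (intro allI impI)
    fix S :: "real set" assume S: "open S" "L \<in> S"
    show "eventually (\<lambda>x. f x \<in> S) U"
    proof (rule ccontr)
      assume "\<not> eventually (\<lambda>x. f x \<in> S) U"
      then have "eventually (\<lambda>x. \<not> f x \<in> S) U" using U unfolding ultrafilter_def by blast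
      then have e1: "eventually (\<lambda>y. y \<notin> S) (filtermap f U)" by (simp add: eventually_filtermap)
      have e2: "eventually (\<lambda>y. y \<in> S) (nhds L)" using S eventually_nhds by blast
      have "eventually (\<lambda>_. False) (inf (nhds L) (filtermap f U))"
        unfolding eventually_inf using e1 e2 by blast
      then show False using L by (simp add: eventually_False)
    qed
  qed
  then show ?thesis by blast
qed

lemma finite_rank_lin:
  assumes "finite_rank T" "finite_rank S"
  shows "finite_rank (s *\<^sub>R T + t *\<^sub>R S)"
proof -
  obtain A B where A: "finite A" "range (blinfun_apply T) \<subseteq> span A"
    and B: "finite B" "range (blinfun_apply S) \<subseteq> span B"
    using assms unfolding finite_rank_def by blast
  have "range (blinfun_apply (s *\<^sub>R T + t *\<^sub>R S)) \<subseteq> span (A \<union> B)"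
  proof
    fix y assume "y \<in> range (blinfun_apply (s *\<^sub>R T + t *\<^sub>R S))"
    then obtain x where y: "y = s *\<^sub>R blinfun_apply T x + t *\<^sub>R blinfun_apply S x"
      by (auto simp: blinfun.bilinear_simps)
    have "blinfun_apply T x \<in> span (A \<union> B)" using A span_mono[of A "A \<union> B"] by blast
    moreover have "blinfun_apply S x \<in> span (A \<union> B)" using B span_mono[of B "A \<union> B"] by blast
    ultimately show "y \<in> span (A \<union> B)" unfolding y by (intro span_add span_scale)
  qed
  then show ?thesis unfolding finite_rank_def using A B by blast
qed

lemma approx_lin:
  fixes T S :: "'e::real_normed_vector \<Rightarrow>\<^sub>L 'x::real_normed_vector"
  assumes "T \<in> approximable" "S \<in> approximable"
  shows "s *\<^sub>R T + t *\<^sub>R S \<in> approximable"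
proof -
  obtain a where a: "\<And>n. finite_rank (a n)" "a \<longlonglongrightarrow> T"
    using assms(1) unfolding approximable_def closure_sequential by blast
  obtain b where b: "\<And>n. finite_rank (b n)" "b \<longlonglongrightarrow> S"
    using assms(2) unfolding approximable_def closure_sequential by blast
  have "(\<lambda>n. s *\<^sub>R a n + t *\<^sub>R b n) \<longlonglongrightarrow> s *\<^sub>R T + t *\<^sub>R S"
    by (intro tendsto_intros a b)
  moreover have "\<forall>n. finite_rank (s *\<^sub>R a n + t *\<^sub>R b n)" using a b finite_rank_lin by blast
  ultimately show ?thesis unfolding approximable_def closure_sequential
    by (intro exI[of _ "\<lambda>n. s *\<^sub>R a n + t *\<^sub>R b n"]) simp
qed

lemma approx_zero: "0 \<in> approximable"
proof -
  have "finite_rank (0 :: 'e::real_normed_vector \<Rightarrow>\<^sub>L 'x::real_normed_vector)"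
    unfolding finite_rank_def by (intro exI[of _ "{}"]) (auto simp: span_empty)
  then show ?thesis unfolding approximable_def using closure_subset by blast
qed

lemma approx_sum:
  fixes T :: "'a \<Rightarrow> ('e::real_normed_vector \<Rightarrow>\<^sub>L 'x::real_normed_vector)"
  assumes "finite F" "\<And>i. i \<in> F \<Longrightarrow> T i \<in> approximable"
  shows "(\<Sum>i\<in>F. l i *\<^sub>R T i) \<in> approximable"
  using assms
proof (induction F rule: finite_induct)
  case empty then show ?case using approx_zero by simp
next
  case (insert x F)
  then show ?case using approx_lin[of "T x" "(\<Sum>i\<in>F. l i *\<^sub>R T i)" "l x" 1] by simp
qed


lemma phi_sum:
  fixes \<phi> :: "('e::real_normed_vector \<Rightarrow>\<^sub>L 'x::real_normed_vector) \<Rightarrow> real"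
  assumes lin: "\<And>T S s t. T \<in> approximable \<Longrightarrow> S \<in> approximable \<Longrightarrow> \<phi> (s *\<^sub>R T + t *\<^sub>R S) = s * \<phi> T + t * \<phi> S"
    and G: "finite G" "G \<subseteq> approximable"
  shows "\<phi> (\<Sum>T\<in>G. l T *\<^sub>R T) = (\<Sum>T\<in>G. l T * \<phi> T)"
  using G
proof (induction G rule: finite_induct)
  case empty
  have "\<phi> 0 = 0" using lin[OF approx_zero approx_zero, of 0 0] by simp
  then show ?case by simp
next
  case (insert a G)
  have "\<phi> (l a *\<^sub>R a + 1 *\<^sub>R (\<Sum>T\<in>G. l T *\<^sub>R T)) = l a * \<phi> a + 1 * \<phi> (\<Sum>T\<in>G. l T *\<^sub>R T)"
    using insert by (intro lin approx_sum) auto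
  then show ?case using insert by simp
qed

lemma dens:
  fixes \<phi> :: "('e::real_normed_vector \<Rightarrow>\<^sub>L 'x::real_normed_vector) \<Rightarrow> real"
  assumes lin: "\<And>T S s t. T \<in> approximable \<Longrightarrow> S \<in> approximable \<Longrightarrow> \<phi> (s *\<^sub>R T + t *\<^sub>R S) = s * \<phi> T + t * \<phi> S"
    and bnd: "\<And>T. T \<in> approximable \<Longrightarrow> \<bar>\<phi> T\<bar> \<le> r * norm T" and r: "r \<ge> 0"
    and F: "finite F" "F \<subseteq> approximable" and \<delta>: "\<delta> > 0"
  shows "\<exists>c. pt_rep c \<and> wn c \<le> r + \<delta> \<and> (\<forall>T\<in>F. \<bar>pt_apply c T - \<phi> T\<bar> \<le> \<delta>)"
proof -
  define scl :: "real \<Rightarrow> (('e \<Rightarrow>\<^sub>L 'x) \<Rightarrow> real) \<Rightarrow> (('e \<Rightarrow>\<^sub>L 'x) \<Rightarrow> real)"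
    where "scl t z = (\<lambda>T. t * z T)" for t z
  have vs: "vector_space scl" unfolding scl_def by unfold_locales (auto simp: algebra_simps fun_eq_iff)
  define FS where "FS = {c :: ('e,'x) ptens. \<exists>S. finite S \<and> (\<forall>p. p \<notin> S \<longrightarrow> c p = 0)}"
  define nrm where "nrm z = (\<Sum>T\<in>F. \<bar>z T\<bar>)" for z :: "('e \<Rightarrow>\<^sub>L 'x) \<Rightarrow> real"
  define \<rho> where "\<rho> = (r + \<delta>) / \<delta>"
  have \<rho>: "\<rho> > 0" using r \<delta> by (simp add: \<rho>_def)
  define tm where "tm z c = wn c + \<rho> * nrm (\<lambda>T. z T - pt_apply c T)" for z c
  define p where "p z = Inf (tm z ` FS)" for z
  have nrm0: "nrm z \<ge> 0" for z unfolding nrm_def by (intro sum_nonneg) auto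
  have tm0: "tm z c \<ge> 0" for z c unfolding tm_def
    by (intro add_nonneg_nonneg wn_nonneg mult_nonneg_nonneg nrm0) (use \<rho> in simp)
  have FSE: "\<exists>S. finite S \<and> (\<forall>q. q \<notin> S \<longrightarrow> c q = 0)" if "c \<in> FS" for c
    using that by (simp add: FS_def)
  have FSI: "c \<in> FS" if "finite S" "\<And>q. q \<notin> S \<Longrightarrow> c q = 0" for c S
    using that by (auto simp: FS_def)
  have FSrep: "pt_rep c" if "c \<in> FS" for c
  proof -
    obtain S where "finite S" "\<forall>q. q \<notin> S \<longrightarrow> c q = 0" using FSE[OF \<open>c \<in> FS\<close>] by blast
    then show ?thesis using fin_supp(1) by blast
  qed
  have zFS: "(\<lambda>_. 0) \<in> FS" by (rule FSI[of "{}"]) auto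
  have ne: "tm z ` FS \<noteq> {}" for z using zFS by blast
  have bb: "bdd_below (tm z ` FS)" for z using tm0 by (intro bdd_belowI[of _ 0]) auto
  have p_le: "c \<in> FS \<Longrightarrow> p z \<le> tm z c" for z c unfolding p_def using bb by (intro cInf_lower) auto
  have p_ge: "(\<And>c. c \<in> FS \<Longrightarrow> y \<le> tm z c) \<Longrightarrow> y \<le> p z" for y z unfolding p_def using ne
    by (intro cInf_greatest) auto
  have p_nonneg: "p z \<ge> 0" for z using p_ge[of 0 z, OF tm0] by simp
  have FSadd: "(\<lambda>q. c q + d q) \<in> FS" if "c \<in> FS" "d \<in> FS" for c d
  proof -
    obtain S1 where S1: "finite S1" "\<forall>q. q \<notin> S1 \<longrightarrow> c q = 0"
      using FSE[OF \<open>c \<in> FS\<close>] by blast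
    obtain S2 where S2: "finite S2" "\<forall>q. q \<notin> S2 \<longrightarrow> d q = 0"
      using FSE[OF \<open>d \<in> FS\<close>] by blast
    show ?thesis by (rule FSI[of "S1 \<union> S2"]) (use S1 S2 in auto)
  qed
  have FSsc: "(\<lambda>q. t * c q) \<in> FS" if "c \<in> FS" for c t
  proof -
    obtain S1 where S1: "finite S1" "\<forall>q. q \<notin> S1 \<longrightarrow> c q = 0"
      using FSE[OF \<open>c \<in> FS\<close>] by blast
    show ?thesis by (rule FSI[of "S1"]) (use S1 in auto)
  qed
  have wn_add: "wn (\<lambda>q. c q + d q) \<le> wn c + wn d" if "c \<in> FS" "d \<in> FS" for c d
  proof -
    obtain S1 where S1: "finite S1" "\<And>q. q \<notin> S1 \<Longrightarrow> c q = 0"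
      using FSE[OF \<open>c \<in> FS\<close>] by blast
    obtain S2 where S2: "finite S2" "\<And>q. q \<notin> S2 \<Longrightarrow> d q = 0"
      using FSE[OF \<open>d \<in> FS\<close>] by blast
    note S = S1 S2
    let ?S = "S1 \<union> S2"
    let ?w = "\<lambda>p::'e \<times> ('x \<Rightarrow>\<^sub>L real). norm (fst p) * norm (snd p)"
    have "wn (\<lambda>q. c q + d q) = (\<Sum>p\<in>?S. \<bar>c p + d p\<bar> * ?w p)"
      by (rule fin_supp(2)) (use S in auto)
    also have "\<dots> \<le> (\<Sum>p\<in>?S. \<bar>c p\<bar> * ?w p + \<bar>d p\<bar> * ?w p)"
      by (intro sum_mono) (simp add: distrib_right[symmetric] mult_right_mono abs_triangle_ineq)
    also have "\<dots> = (\<Sum>p\<in>?S. \<bar>c p\<bar> * ?w p) + (\<Sum>p\<in>?S. \<bar>d p\<bar> * ?w p)" by (rule sum.distrib)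
    also have "(\<Sum>p\<in>?S. \<bar>c p\<bar> * ?w p) = wn c" by (rule fin_supp(2)[symmetric]) (use S in auto)
    also have "(\<Sum>p\<in>?S. \<bar>d p\<bar> * ?w p) = wn d" by (rule fin_supp(2)[symmetric]) (use S in auto)
    finally show ?thesis .
  qed
  have wn_sc: "wn (\<lambda>q. t * c q) = \<bar>t\<bar> * wn c" if "c \<in> FS" for c t
  proof -
    obtain S1 where S: "finite S1" "\<And>q. q \<notin> S1 \<Longrightarrow> c q = 0"
      using FSE[OF \<open>c \<in> FS\<close>] by blast
    have "wn (\<lambda>q. t * c q) = (\<Sum>p\<in>S1. \<bar>t * c p\<bar> * (norm (fst p) * norm (snd p)))"
      by (rule fin_supp(2)) (use S in auto)
    also have "\<dots> = \<bar>t\<bar> * (\<Sum>p\<in>S1. \<bar>c p\<bar> * (norm (fst p) * norm (snd p)))"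
      by (simp add: sum_distrib_left abs_mult algebra_simps)
    also have "(\<Sum>p\<in>S1. \<bar>c p\<bar> * (norm (fst p) * norm (snd p))) = wn c"
      by (rule fin_supp(2)[symmetric]) (use S in auto)
    finally show ?thesis .
  qed
  have ap_add: "pt_apply (\<lambda>q. c q + d q) T = pt_apply c T + pt_apply d T" if "c \<in> FS" "d \<in> FS" for c d T
    using pt_apply_lin[OF FSrep[OF that(1)] FSrep[OF that(2)], of 1 1 T] by simp
  have ap_sc: "pt_apply (\<lambda>q. t * c q) T = t * pt_apply c T" if "c \<in> FS" for c t T
    using pt_apply_lin[OF FSrep[OF that] FSrep[OF that], of t 0 T] by simp
  have nrm_add: "nrm (\<lambda>T. x T + y T) \<le> nrm x + nrm y" for x y
    unfolding nrm_def by (simp add: sum.distrib[symmetric] sum_mono abs_triangle_ineq)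
  have nrm_sc: "nrm (\<lambda>T. t * x T) = \<bar>t\<bar> * nrm x" for x t
    unfolding nrm_def by (simp add: sum_distrib_left abs_mult)
  have sub: "p (x + y) \<le> p x + p y" for x y
  proof -
    have "p (x + y) - tm y d \<le> tm x c" if "c \<in> FS" "d \<in> FS" for c d
    proof -
      have "p (x + y) \<le> tm (x + y) (\<lambda>q. c q + d q)" using p_le FSadd that by blast
      also have "\<dots> \<le> tm x c + tm y d"
      proof -
        have "nrm (\<lambda>T. (x + y) T - pt_apply (\<lambda>q. c q + d q) T)
              = nrm (\<lambda>T. (x T - pt_apply c T) + (y T - pt_apply d T))"
          using ap_add[OF that] by (simp add: algebra_simps)
        also have "\<dots> \<le> nrm (\<lambda>T. x T - pt_apply c T) + nrm (\<lambda>T. y T - pt_apply d T)" by (rule nrm_add)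
        finally have "nrm (\<lambda>T. (x + y) T - pt_apply (\<lambda>q. c q + d q) T) \<le> nrm (\<lambda>T. x T - pt_apply c T) + nrm (\<lambda>T. y T - pt_apply d T)" .
        then have "\<rho> * nrm (\<lambda>T. (x + y) T - pt_apply (\<lambda>q. c q + d q) T) \<le> \<rho> * nrm (\<lambda>T. x T - pt_apply c T) + \<rho> * nrm (\<lambda>T. y T - pt_apply d T)"
          using \<rho> by (simp add: distrib_left[symmetric] mult_left_mono)
        then show ?thesis unfolding tm_def using wn_add[OF that] by linarith
      qed
      finally show ?thesis by simp
    qed
    then have "p (x + y) - tm y d \<le> p x" if "d \<in> FS" for d using p_ge that by blast
    then have "p (x + y) - p x \<le> tm y d" if "d \<in> FS" for d using that by force
    then have "p (x + y) - p x \<le> p y" using p_ge by blast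
    then show ?thesis by simp
  qed
  have hom_le: "p (scl t z) \<le> t * p z" if t: "t > 0" for t z
  proof -
    have "p (scl t z) / t \<le> tm z c" if "c \<in> FS" for c
    proof -
      have "p (scl t z) \<le> tm (scl t z) (\<lambda>q. t * c q)" using p_le FSsc that by blast
      also have "tm (scl t z) (\<lambda>q. t * c q) = t * tm z c"
      proof -
        have "nrm (\<lambda>T. scl t z T - pt_apply (\<lambda>q. t * c q) T) = nrm (\<lambda>T. t * (z T - pt_apply c T))"
          using ap_sc[OF that] by (simp add: scl_def algebra_simps)
        also have "\<dots> = t * nrm (\<lambda>T. z T - pt_apply c T)" using nrm_sc t by simp
        finally show ?thesis unfolding tm_def using wn_sc[OF that, of t] t by (simp add: algebra_simps)
      qed
      finally show ?thesis using t by (simp add: divide_simps mult.commute)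
    qed
    then have "p (scl t z) / t \<le> p z" using p_ge by blast
    then show ?thesis using t by (simp add: divide_simps mult.commute)
  qed
  have p00: "p (\<lambda>T. 0) = 0"
  proof -
    have "p (\<lambda>T. 0) \<le> tm (\<lambda>T. 0) (\<lambda>_. 0)" using p_le zFS by blast
    also have "\<dots> = 0" unfolding tm_def nrm_def wn_def pt_apply_def by simp
    finally show ?thesis using p_nonneg[of "\<lambda>T. 0"] by simp
  qed
  have hom: "p (scl t z) = t * p z" if "t \<ge> 0" for t z
  proof (cases "t = 0")
    case True then show ?thesis using p00 by (simp add: scl_def)
  next
    case False
    then have t: "t > 0" using that by simp
    have "p z = p (scl (1/t) (scl t z))" using t by (simp add: scl_def)
    also have "\<dots> \<le> (1/t) * p (scl t z)" using hom_le[of "1/t" "scl t z"] t by simp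
    finally have "t * p z \<le> p (scl t z)" using t by (simp add: divide_simps mult.commute)
    then show ?thesis using hom_le[OF t, of z] by simp
  qed
  obtain g where gadd: "\<forall>x y. g (x+y) = g x + g y" and gsc: "\<forall>t x. g (scl t x) = t * g x"
    and gle: "\<forall>x. g x \<le> p x" and gphi: "g \<phi> = p \<phi>"
    using hahn_banach[OF vs, of p \<phi>] sub hom by blast
  have pF: "p z = p z'" if "\<And>T. T \<in> F \<Longrightarrow> z T = z' T" for z z'
  proof -
    have "nrm (\<lambda>T. z T - pt_apply c T) = nrm (\<lambda>T. z' T - pt_apply c T)" for c
      unfolding nrm_def using that by (intro sum.cong) auto
    then have "tm z = tm z'" unfolding tm_def by (simp add: fun_eq_iff)
    then show ?thesis unfolding p_def by simp
  qed
  have g0: "g w = 0" if "\<And>T. T \<in> F \<Longrightarrow> w T = 0" for w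
  proof -
    have "g w \<le> 0" using gle pF[of w "\<lambda>T. 0"] that p00 by (metis)
    moreover have "g (scl (-1) w) \<le> 0" using gle pF[of "scl (-1) w" "\<lambda>T. 0"] that p00
      unfolding scl_def by (metis mult_zero_right)
    ultimately show ?thesis using gsc by (metis mult_minus1 neg_le_0_iff_le order_antisym_conv)
  qed
  define dl where "dl T = (\<lambda>S. if S = T then (1::real) else 0)" for T :: "'e \<Rightarrow>\<^sub>L 'x"
  have gsum: "g (\<lambda>S. if S \<in> G then z S else 0) = (\<Sum>T\<in>G. z T * g (dl T))" if "finite G" for G z
    using that
  proof (induction G rule: finite_induct)
    case empty
    have "g (\<lambda>S. 0) = g (scl 0 (\<lambda>S. 0))" by (simp add: scl_def)
    then show ?case using gsc by simp
  next
    case (insert a G)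
    have "(\<lambda>S. if S \<in> insert a G then z S else 0) = (\<lambda>S. if S \<in> G then z S else 0) + scl (z a) (dl a)"
      using insert(2) by (auto simp: fun_eq_iff scl_def dl_def)
    then show ?case using insert gadd gsc by simp
  qed
  have gF: "g z = (\<Sum>T\<in>F. z T * g (dl T))" for z
  proof -
    have "z = (\<lambda>S. if S \<in> F then z S else 0) + (\<lambda>S. if S \<in> F then 0 else z S)" by (auto simp: fun_eq_iff)
    then have "g z = g (\<lambda>S. if S \<in> F then z S else 0) + g (\<lambda>S. if S \<in> F then 0 else z S)"
      using gadd by metis
    also have "g (\<lambda>S. if S \<in> F then 0 else z S) = 0" by (rule g0) auto
    finally show ?thesis using gsum[OF F(1)] by simp
  qed
  define S where "S = (\<Sum>T\<in>F. g (dl T) *\<^sub>R T)"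
  have Sapp: "blinfun_apply f (blinfun_apply S a) = (\<Sum>T\<in>F. blinfun_apply f (blinfun_apply T a) * g (dl T))" for f a
    unfolding S_def by (simp add: blinfun.sum_left blinfun.sum_right blinfun.scaleR_left blinfun.scaleR_right mult.commute)
  have Snorm: "norm S \<le> 1"
  proof (rule norm_blinfun_bound)
    fix a
    obtain f :: "'x \<Rightarrow>\<^sub>L real" where f: "norm f \<le> 1" "blinfun_apply f (blinfun_apply S a) = norm (blinfun_apply S a)"
      using norming by blast
    define c :: "('e,'x) ptens" where "c = (\<lambda>q. if q = (a,f) then 1 else 0)"
    have cS: "finite {(a,f)}" "\<And>q. q \<notin> {(a,f)} \<Longrightarrow> c q = 0" unfolding c_def by auto
    have cFS: "c \<in> FS" by (rule FSI[OF cS])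
    have capp: "pt_apply c T = blinfun_apply f (blinfun_apply T a)" for T
      using fin_supp(3)[OF cS] by (simp add: c_def)
    have cwn: "wn c = norm a * norm f" using fin_supp(2)[OF cS] by (simp add: c_def)
    have "g (\<lambda>T. pt_apply c T) \<le> p (\<lambda>T. pt_apply c T)" using gle by blast
    also have "\<dots> \<le> tm (\<lambda>T. pt_apply c T) c" using p_le cFS by blast
    also have "\<dots> = norm a * norm f" unfolding tm_def nrm_def cwn by simp
    also have "\<dots> \<le> norm a" using f(1) by (simp add: mult_left_le)
    finally have "g (\<lambda>T. pt_apply c T) \<le> norm a" .
    moreover have "g (\<lambda>T. pt_apply c T) = norm (blinfun_apply S a)"
      using gF[of "\<lambda>T. pt_apply c T"] Sapp[of f a] f(2) capp by simp
    ultimately show "norm (blinfun_apply S a) \<le> 1 * norm a" by simp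
  qed (simp)
  have SA: "S \<in> approximable" unfolding S_def
    by (rule approx_sum[where T="\<lambda>T. T"]) (use F in auto)
  have "p \<phi> = \<phi> S"
  proof -
    have "p \<phi> = (\<Sum>T\<in>F. \<phi> T * g (dl T))" using gphi gF[of \<phi>] by simp
    also have "\<dots> = \<phi> S" unfolding S_def using phi_sum[OF lin F, of "\<lambda>T. g (dl T)"] by (simp add: mult.commute)
    finally show ?thesis .
  qed
  also have "\<phi> S \<le> r * norm S" using bnd[OF SA] by simp
  also have "\<dots> \<le> r" using Snorm r by (simp add: mult_left_le)
  finally have "p \<phi> < r + \<delta>" using \<delta> by simp
  then obtain c where cFS: "c \<in> FS" and cl: "tm \<phi> c < r + \<delta>"
    unfolding p_def using ne bb cInf_less_iff by (metis (no_types, lifting) imageE)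
  have rn: "\<rho> * nrm (\<lambda>T. \<phi> T - pt_apply c T) \<ge> 0" using \<rho> nrm0 by simp
  have wnc: "wn c \<le> r + \<delta>" using cl rn unfolding tm_def by linarith
  have "\<rho> * nrm (\<lambda>T. \<phi> T - pt_apply c T) < r + \<delta>" using cl wn_nonneg[of c] unfolding tm_def
    by linarith
  then have nl: "nrm (\<lambda>T. \<phi> T - pt_apply c T) < \<delta>" using \<rho> \<delta> r
    unfolding \<rho>_def by (simp add: divide_simps mult.commute)
  have "\<bar>pt_apply c T - \<phi> T\<bar> \<le> \<delta>" if "T \<in> F" for T
  proof -
    have "\<bar>\<phi> T - pt_apply c T\<bar> \<le> nrm (\<lambda>T. \<phi> T - pt_apply c T)"
      unfolding nrm_def using F(1) that by (intro member_le_sum) auto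
    then show ?thesis using nl by simp
  qed
  then show ?thesis using FSrep[OF cFS] wnc by blast
qed


lemma ultra_lim:
  fixes f :: "'i \<Rightarrow> real"
  assumes U: "ultrafilter U" and b: "\<And>i. \<bar>f i\<bar> \<le> K"
  shows "(f \<longlongrightarrow> Lim U f) U"
proof -
  obtain L where L: "(f \<longlongrightarrow> L) U" using ultra_conv[of U f K] U b by blast
  have "U \<noteq> bot" using U ultrafilter_def by blast
  then have "Lim U f = L" using L by (intro tendsto_Lim) auto
  then show ?thesis using L by simp
qed

lemma dn_nonneg_bound:
  fixes \<phi> :: "('e::real_normed_vector \<Rightarrow>\<^sub>L 'x::real_normed_vector) \<Rightarrow> real"
  assumes "\<phi> \<in> approx_dual"
  shows "dual_norm \<phi> \<ge> 0" "\<And>T. T \<in> approximable \<Longrightarrow> \<bar>\<phi> T\<bar> \<le> dual_norm \<phi> * norm T"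
proof -
  have lin: "\<And>(T::'e \<Rightarrow>\<^sub>L 'x) S s t. T \<in> approximable \<Longrightarrow> S \<in> approximable \<Longrightarrow> \<phi> (s *\<^sub>R T + t *\<^sub>R S) = s * \<phi> T + t * \<phi> S"
    using assms unfolding approx_dual_def by blast
  obtain K where K: "\<And>T. T \<in> approximable \<Longrightarrow> \<bar>\<phi> T\<bar> \<le> K * norm T"
    using assms unfolding approx_dual_def by blast
  have bdd: "bdd_above ((\<lambda>T. \<bar>\<phi> T\<bar>) ` (approximable \<inter> {T. norm T \<le> 1}))"
  proof (rule bdd_aboveI2)
    fix T :: "'e \<Rightarrow>\<^sub>L 'x" assume T: "T \<in> approximable \<inter> {T. norm T \<le> (1::real)}"
    have "\<bar>\<phi> T\<bar> \<le> K * norm T" using K T by blast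
    also have "\<dots> \<le> max K 0 * norm T" by (intro mult_right_mono) auto
    also have "\<dots> \<le> max K 0" using T by (simp add: mult_left_le)
    finally show "\<bar>\<phi> T\<bar> \<le> max K 0" .
  qed
  have up: "\<bar>\<phi> T\<bar> \<le> dual_norm \<phi>" if "T \<in> approximable" "norm T \<le> 1" for T
    unfolding dual_norm_def using bdd that by (intro cSUP_upper) auto
  have phi0: "\<phi> 0 = 0" using lin[OF approx_zero approx_zero, of 0 0] by simp
  show "dual_norm \<phi> \<ge> 0" using up[OF approx_zero] phi0 by simp
  show "\<bar>\<phi> T\<bar> \<le> dual_norm \<phi> * norm T" if T: "T \<in> approximable" for T
  proof (cases "T = 0")
    case True then show ?thesis using phi0 by simp
  next
    case False
    then have n: "norm T > 0" by simp
    have TA: "(1 / norm T) *\<^sub>R T \<in> approximable"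
      using approx_lin[OF T approx_zero, of "1 / norm T" 0] by simp
    have "\<phi> ((1 / norm T) *\<^sub>R T) = (1 / norm T) * \<phi> T"
      using lin[OF T approx_zero, of "1 / norm T" 0] by simp
    then have e: "\<phi> T = norm T * \<phi> ((1 / norm T) *\<^sub>R T)" using n by simp
    have "\<bar>\<phi> ((1 / norm T) *\<^sub>R T)\<bar> \<le> dual_norm \<phi>" using up[OF TA] n by simp
    then have "norm T * \<bar>\<phi> ((1 / norm T) *\<^sub>R T)\<bar> \<le> norm T * dual_norm \<phi>"
      by (intro mult_left_mono) auto
    then show ?thesis using e by (simp add: abs_mult mult.commute)
  qed
qed

lemma up_fam_bound:
  assumes "v \<in> up_fam"
  shows "\<exists>K. \<forall>\<alpha>. pt_rep (v \<alpha>) \<and> 0 \<le> pt_norm (v \<alpha>) \<and> pt_norm (v \<alpha>) \<le> K"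
proof -
  have r: "\<forall>\<alpha>. pt_rep (v \<alpha>)" and b: "bounded (range (\<lambda>\<alpha>. pt_norm (v \<alpha>)))"
    using assms unfolding up_fam_def by auto
  obtain K where "\<forall>x\<in>range (\<lambda>\<alpha>. pt_norm (v \<alpha>)). norm x \<le> K" using b bounded_iff by blast
  then show ?thesis using r pt_norm_nonneg by (intro exI[of _ K]) auto
qed

lemma up_famI:
  assumes "\<And>\<alpha>. pt_rep (v \<alpha>)" "\<And>\<alpha>. pt_norm (v \<alpha>) \<le> K"
  shows "v \<in> up_fam"
proof -
  have "bounded (range (\<lambda>\<alpha>. pt_norm (v \<alpha>)))"
    unfolding bounded_iff
  proof (intro exI[of _ K] ballI)
    fix x assume "x \<in> range (\<lambda>\<alpha>. pt_norm (v \<alpha>))"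
    then obtain \<alpha> where "x = pt_norm (v \<alpha>)" by blast
    then show "norm x \<le> K" using assms pt_norm_nonneg[OF assms(1)[of \<alpha>]] by simp
  qed
  then show ?thesis unfolding up_fam_def using assms by auto
qed

context
  fixes U :: "'i filter" and Fa :: "'i \<Rightarrow> ('e::real_normed_vector \<Rightarrow>\<^sub>L 'x::real_normed_vector) set"
    and Na :: "'i \<Rightarrow> nat"
  assumes U: "ultrafilter U" and Fafin: "\<And>\<alpha>. finite (Fa \<alpha>)"
    and ev: "\<And>T N. eventually (\<lambda>\<alpha>. T \<in> Fa \<alpha> \<and> N \<le> Na \<alpha>) U"
begin

definition Psi :: "('i \<Rightarrow> ('e, 'x) ptens) \<Rightarrow> ('e \<Rightarrow>\<^sub>L 'x) \<Rightarrow> real" where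
  "Psi v = (\<lambda>T. if T \<in> approximable then Lim U (\<lambda>\<alpha>. pt_apply (v \<alpha>) T) else 0)"

lemma Ubot: "U \<noteq> bot" using U ultrafilter_def by blast

lemma psi_tendsto:
  assumes "v \<in> up_fam" "T \<in> approximable"
  shows "((\<lambda>\<alpha>. pt_apply (v \<alpha>) T) \<longlongrightarrow> Psi v T) U"
proof -
  obtain K where K: "\<And>\<alpha>. pt_rep (v \<alpha>)" "\<And>\<alpha>. pt_norm (v \<alpha>) \<le> K" "\<And>\<alpha>. 0 \<le> pt_norm (v \<alpha>)"
    using up_fam_bound[OF assms(1)] by blast
  have "\<bar>pt_apply (v \<alpha>) T\<bar> \<le> K * norm T" for \<alpha>
    using pt_apply_bound[OF K(1)] K(2) by (meson mult_right_mono norm_ge_zero order_trans)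
  then have "((\<lambda>\<alpha>. pt_apply (v \<alpha>) T) \<longlongrightarrow> Lim U (\<lambda>\<alpha>. pt_apply (v \<alpha>) T)) U"
    by (rule ultra_lim[OF U])
  then show ?thesis unfolding Psi_def using assms(2) by simp
qed

lemma psi_bound:
  assumes "v \<in> up_fam"
  shows "\<exists>K. \<forall>T\<in>approximable. \<bar>Psi v T\<bar> \<le> K * norm T"
proof -
  obtain K where K: "\<And>\<alpha>. pt_rep (v \<alpha>)" "\<And>\<alpha>. pt_norm (v \<alpha>) \<le> K" "\<And>\<alpha>. 0 \<le> pt_norm (v \<alpha>)"
    using up_fam_bound[OF assms(1)] by blast
  have "\<bar>Psi v T\<bar> \<le> K * norm T" if T: "T \<in> approximable" for T
  proof (rule tendsto_upperbound)
    show "((\<lambda>\<alpha>. \<bar>pt_apply (v \<alpha>) T\<bar>) \<longlongrightarrow> \<bar>Psi v T\<bar>) U" by (intro tendsto_rabs psi_tendsto assms T)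
    have "\<bar>pt_apply (v \<alpha>) T\<bar> \<le> K * norm T" for \<alpha>
      using pt_apply_bound[OF K(1)] K(2) by (meson mult_right_mono norm_ge_zero order_trans)
    then show "eventually (\<lambda>\<alpha>. \<bar>pt_apply (v \<alpha>) T\<bar> \<le> K * norm T) U" by simp
  qed (rule Ubot)
  then show ?thesis by blast
qed

lemma psi_dual:
  assumes "v \<in> up_fam"
  shows "Psi v \<in> approx_dual"
proof -
  have rep: "\<And>\<alpha>. pt_rep (v \<alpha>)" using assms unfolding up_fam_def by blast
  have "Psi v (s *\<^sub>R T + t *\<^sub>R S) = s * Psi v T + t * Psi v S"
    if T: "T \<in> approximable" and S: "S \<in> approximable" for T S s t
  proof -
    have TS: "s *\<^sub>R T + t *\<^sub>R S \<in> approximable" using approx_lin[OF T S] .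
    have "((\<lambda>\<alpha>. s * pt_apply (v \<alpha>) T + t * pt_apply (v \<alpha>) S) \<longlongrightarrow> s * Psi v T + t * Psi v S) U"
      by (intro tendsto_intros psi_tendsto assms T S)
    moreover have "(\<lambda>\<alpha>. pt_apply (v \<alpha>) (s *\<^sub>R T + t *\<^sub>R S)) = (\<lambda>\<alpha>. s * pt_apply (v \<alpha>) T + t * pt_apply (v \<alpha>) S)"
      using pt_apply_linT[OF rep] by simp
    ultimately have l1: "((\<lambda>\<alpha>. pt_apply (v \<alpha>) (s *\<^sub>R T + t *\<^sub>R S)) \<longlongrightarrow> s * Psi v T + t * Psi v S) U" by simp
    have l2: "((\<lambda>\<alpha>. pt_apply (v \<alpha>) (s *\<^sub>R T + t *\<^sub>R S)) \<longlongrightarrow> Psi v (s *\<^sub>R T + t *\<^sub>R S)) U"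
      by (rule psi_tendsto[OF assms TS])
    show ?thesis using tendsto_unique[OF Ubot l2 l1] .
  qed
  then have A1: "\<forall>T\<in>approximable. \<forall>S\<in>approximable. \<forall>s t. Psi v (s *\<^sub>R T + t *\<^sub>R S) = s * Psi v T + t * Psi v S"
    by blast
  have A2: "\<exists>K. \<forall>T\<in>approximable. \<bar>Psi v T\<bar> \<le> K * norm T" by (rule psi_bound[OF assms])
  have A3: "\<forall>T. T \<notin> approximable \<longrightarrow> Psi v T = 0" unfolding Psi_def by simp
  show ?thesis unfolding approx_dual_def using A1 A2 A3 by (intro CollectI conjI)
qed

lemma fam_exists:
  fixes \<phi> :: "('e \<Rightarrow>\<^sub>L 'x) \<Rightarrow> real"
  assumes "\<phi> \<in> approx_dual"
  shows "\<exists>u. (\<forall>\<alpha>. pt_rep (u \<alpha>) \<and> pt_norm (u \<alpha>) \<le> dual_norm \<phi> + 1)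
     \<and> (\<forall>T\<in>approximable. ((\<lambda>\<alpha>. pt_apply (u \<alpha>) T) \<longlongrightarrow> \<phi> T) U)
     \<and> (\<forall>\<delta>>0. eventually (\<lambda>\<alpha>. pt_norm (u \<alpha>) \<le> dual_norm \<phi> + \<delta>) U)"
proof -
  define r where "r = dual_norm \<phi>"
  have r: "r \<ge> 0" and bnd: "\<And>T::'e \<Rightarrow>\<^sub>L 'x. T \<in> approximable \<Longrightarrow> \<bar>\<phi> T\<bar> \<le> r * norm T"
    using dn_nonneg_bound[OF assms] unfolding r_def by auto
  have lin: "\<And>(T::'e \<Rightarrow>\<^sub>L 'x) S s t. T \<in> approximable \<Longrightarrow> S \<in> approximable \<Longrightarrow> \<phi> (s *\<^sub>R T + t *\<^sub>R S) = s * \<phi> T + t * \<phi> S"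
    using assms unfolding approx_dual_def by blast
  define P where "P \<alpha> c \<longleftrightarrow> pt_rep c \<and> wn c \<le> r + 1 / (real (Na \<alpha>) + 1)
      \<and> (\<forall>T\<in>Fa \<alpha> \<inter> approximable. \<bar>pt_apply c T - \<phi> T\<bar> \<le> 1 / (real (Na \<alpha>) + 1))" for \<alpha> c
  have exP: "\<exists>c. P \<alpha> c" for \<alpha>
    unfolding P_def using dens[OF lin bnd r, of "Fa \<alpha> \<inter> approximable" "1 / (real (Na \<alpha>) + 1)"] Fafin
    by auto
  define u where "u \<alpha> = (SOME c. P \<alpha> c)" for \<alpha>
  have uP: "P \<alpha> (u \<alpha>)" for \<alpha> unfolding u_def using exP by (rule someI_ex)
  have urep: "pt_rep (u \<alpha>)" for \<alpha> using uP[of \<alpha>] unfolding P_def by blast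
  have unorm: "pt_norm (u \<alpha>) \<le> r + 1 / (real (Na \<alpha>) + 1)" for \<alpha>
    using uP[of \<alpha>] pt_norm_le_wn[OF urep[of \<alpha>]] unfolding P_def by linarith
  have inv_le: "1 / (real n + 1) \<le> 1 / (real N + 1)" if "N \<le> n" for n N :: nat
    using that by (simp add: divide_simps)
  have small: "\<exists>N::nat. 1 / (real N + 1) < e" if "e > 0" for e :: real
  proof -
    obtain N :: nat where "1 / e < real N" using reals_Archimedean2 by blast
    then have "1 / (real N + 1) < e" using that by (simp add: divide_simps mult.commute) (smt (verit) mult_less_cancel_left_pos)
    then show ?thesis by blast
  qed
  have conv: "((\<lambda>\<alpha>. pt_apply (u \<alpha>) T) \<longlongrightarrow> \<phi> T) U" if T: "T \<in> approximable" for T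
    unfolding tendsto_iff
  proof (intro allI impI)
    fix e :: real assume e: "e > 0"
    obtain N :: nat where N: "1 / (real N + 1) < e" using small[OF e] by blast
    show "eventually (\<lambda>\<alpha>. dist (pt_apply (u \<alpha>) T) (\<phi> T) < e) U"
      using ev[of T N]
    proof (rule eventually_mono)
      fix \<alpha> assume h: "T \<in> Fa \<alpha> \<and> N \<le> Na \<alpha>"
      then have "\<bar>pt_apply (u \<alpha>) T - \<phi> T\<bar> \<le> 1 / (real (Na \<alpha>) + 1)" using uP[of \<alpha>] T unfolding P_def by blast
      also have "\<dots> \<le> 1 / (real N + 1)" using inv_le h by blast
      finally show "dist (pt_apply (u \<alpha>) T) (\<phi> T) < e" using N by (simp add: dist_real_def)
    qed
  qed
  have evn: "eventually (\<lambda>\<alpha>. pt_norm (u \<alpha>) \<le> r + \<delta>) U" if d: "\<delta> > 0" for \<delta>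
  proof -
    obtain N :: nat where N: "1 / (real N + 1) < \<delta>" using small[OF d] by blast
    show ?thesis using ev[of 0 N]
    proof (rule eventually_mono)
      fix \<alpha> assume h: "0 \<in> Fa \<alpha> \<and> N \<le> Na \<alpha>"
      have "pt_norm (u \<alpha>) \<le> r + 1 / (real (Na \<alpha>) + 1)" by (rule unorm)
      also have "\<dots> \<le> r + 1 / (real N + 1)" using inv_le h by simp
      finally show "pt_norm (u \<alpha>) \<le> r + \<delta>" using N by simp
    qed
  qed
  have "pt_norm (u \<alpha>) \<le> r + 1" for \<alpha>
  proof -
    have "1 / (real (Na \<alpha>) + 1) \<le> 1" by (simp add: divide_simps)
    then show ?thesis using unorm[of \<alpha>] by linarith
  qed
  then show ?thesis using urep conv evn unfolding r_def by blast
qed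

lemma psi_lin:
  assumes "v \<in> up_fam" "w \<in> up_fam"
  shows "Psi (\<lambda>\<alpha> p. s * v \<alpha> p + t * w \<alpha> p) = (\<lambda>T. s * Psi v T + t * Psi w T)"
proof
  fix T
  have rv: "\<And>\<alpha>. pt_rep (v \<alpha>)" and rw: "\<And>\<alpha>. pt_rep (w \<alpha>)" using assms unfolding up_fam_def by blast+
  show "Psi (\<lambda>\<alpha> p. s * v \<alpha> p + t * w \<alpha> p) T = s * Psi v T + t * Psi w T"
  proof (cases "T \<in> approximable")
    case True
    have "(\<lambda>\<alpha>. pt_apply (\<lambda>p. s * v \<alpha> p + t * w \<alpha> p) T) = (\<lambda>\<alpha>. s * pt_apply (v \<alpha>) T + t * pt_apply (w \<alpha>) T)"
      using pt_apply_lin[OF rv rw] by simp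
    moreover have "((\<lambda>\<alpha>. s * pt_apply (v \<alpha>) T + t * pt_apply (w \<alpha>) T) \<longlongrightarrow> s * Psi v T + t * Psi w T) U"
      by (intro tendsto_intros psi_tendsto assms True)
    ultimately have "((\<lambda>\<alpha>. pt_apply (\<lambda>p. s * v \<alpha> p + t * w \<alpha> p) T) \<longlongrightarrow> s * Psi v T + t * Psi w T) U" by simp
    then show ?thesis unfolding Psi_def[of "\<lambda>\<alpha> p. s * v \<alpha> p + t * w \<alpha> p"] using True tendsto_Lim[OF Ubot[unfolded trivial_limit_def[symmetric]]]
      by (simp add: tendsto_Lim Ubot)
  next
    case False then show ?thesis unfolding Psi_def by simp
  qed
qed

lemma psi_onto: "Psi ` up_fam = approx_dual"
proof
  show "Psi ` up_fam \<subseteq> approx_dual" using psi_dual by blast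
  show "approx_dual \<subseteq> Psi ` up_fam"
  proof
    fix \<phi> :: "('e \<Rightarrow>\<^sub>L 'x) \<Rightarrow> real" assume phi: "\<phi> \<in> approx_dual"
    obtain u where u: "\<And>\<alpha>. pt_rep (u \<alpha>)" "\<And>\<alpha>. pt_norm (u \<alpha>) \<le> dual_norm \<phi> + 1"
      "\<And>T. T \<in> approximable \<Longrightarrow> ((\<lambda>\<alpha>. pt_apply (u \<alpha>) T) \<longlongrightarrow> \<phi> T) U"
      using fam_exists[OF phi] by blast
    have uf: "u \<in> up_fam" using up_famI[OF u(1) u(2)] .
    have "Psi u = \<phi>"
    proof
      fix T show "Psi u T = \<phi> T"
      proof (cases "T \<in> approximable")
        case True
        then show ?thesis using tendsto_unique[OF Ubot psi_tendsto[OF uf True] u(3)[OF True]] by simp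
      next
        case False then show ?thesis using phi unfolding Psi_def approx_dual_def by simp
      qed
    qed
    then show "\<phi> \<in> Psi ` up_fam" using uf by blast
  qed
qed

lemma psi_ker:
  assumes "v \<in> up_fam"
  shows "Psi v = (\<lambda>_. 0) \<longleftrightarrow> v \<in> W0 U"
proof
  assume h: "Psi v = (\<lambda>_. 0)"
  have "((\<lambda>\<alpha>. pt_apply (v \<alpha>) T) \<longlongrightarrow> 0) U" if "T \<in> approximable" for T
    using psi_tendsto[OF assms that] h by simp
  then show "v \<in> W0 U" unfolding W0_def using assms by blast
next
  assume h: "v \<in> W0 U"
  show "Psi v = (\<lambda>_. 0)"
  proof
    fix T show "Psi v T = 0"
    proof (cases "T \<in> approximable")
      case True
      have "((\<lambda>\<alpha>. pt_apply (v \<alpha>) T) \<longlongrightarrow> 0) U" using h True unfolding W0_def by blast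
      then show ?thesis using tendsto_unique[OF Ubot psi_tendsto[OF assms True]] by simp
    next
      case False then show ?thesis unfolding Psi_def by simp
    qed
  qed
qed


lemma zero_W0: "(\<lambda>(\<alpha>::'i) (p::'e \<times> ('x \<Rightarrow>\<^sub>L real)). 0::real) \<in> W0 U"
proof -
  have r0: "pt_rep (\<lambda>p::'e \<times> ('x \<Rightarrow>\<^sub>L real). 0)" unfolding pt_rep_def by simp
  have n0: "pt_norm (\<lambda>p::'e \<times> ('x \<Rightarrow>\<^sub>L real). 0) \<le> 0"
    using pt_norm_le_wn[OF r0] unfolding wn_def by simp
  have u0: "(\<lambda>(\<alpha>::'i) (p::'e \<times> ('x \<Rightarrow>\<^sub>L real)). 0::real) \<in> up_fam"
    by (rule up_famI[where K=0]) (use r0 n0 in auto)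
  have a0: "pt_apply (\<lambda>p::'e \<times> ('x \<Rightarrow>\<^sub>L real). 0) T = 0" for T :: "'e \<Rightarrow>\<^sub>L 'x"
    unfolding pt_apply_def by simp
  show ?thesis unfolding W0_def using u0 a0 by simp
qed

lemma up_norm_tendsto:
  assumes "v \<in> up_fam" "w \<in> up_fam"
  shows "((\<lambda>\<alpha>. pt_norm (\<lambda>p. v \<alpha> p - w \<alpha> p)) \<longlongrightarrow> up_norm U (\<lambda>\<alpha> p. v \<alpha> p - w \<alpha> p)) U"
    "up_norm U (\<lambda>\<alpha> p. v \<alpha> p - w \<alpha> p) \<ge> 0"
proof -
  obtain Kv where Kv: "\<And>\<alpha>. pt_rep (v \<alpha>)" "\<And>\<alpha>. pt_norm (v \<alpha>) \<le> Kv"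
    using up_fam_bound[OF assms(1)] by blast
  obtain Kw where Kw: "\<And>\<alpha>. pt_rep (w \<alpha>)" "\<And>\<alpha>. pt_norm (w \<alpha>) \<le> Kw"
    using up_fam_bound[OF assms(2)] by blast
  have nn: "pt_norm (\<lambda>p. v \<alpha> p - w \<alpha> p) \<ge> 0" for \<alpha> using pt_norm_nonneg pt_rep_diff Kv Kw by blast
  have "\<bar>pt_norm (\<lambda>p. v \<alpha> p - w \<alpha> p)\<bar> \<le> Kv + Kw" for \<alpha>
    using pt_norm_diff[OF Kv(1) Kw(1), of \<alpha> \<alpha>] Kv(2)[of \<alpha>] Kw(2)[of \<alpha>] nn[of \<alpha>] by simp
  then have t: "((\<lambda>\<alpha>. pt_norm (\<lambda>p. v \<alpha> p - w \<alpha> p)) \<longlongrightarrow> up_norm U (\<lambda>\<alpha> p. v \<alpha> p - w \<alpha> p)) U"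
    unfolding up_norm_def by (rule ultra_lim[OF U])
  then show "((\<lambda>\<alpha>. pt_norm (\<lambda>p. v \<alpha> p - w \<alpha> p)) \<longlongrightarrow> up_norm U (\<lambda>\<alpha> p. v \<alpha> p - w \<alpha> p)) U" .
  show "up_norm U (\<lambda>\<alpha> p. v \<alpha> p - w \<alpha> p) \<ge> 0"
    by (rule tendsto_lowerbound[OF t]) (use nn Ubot in auto)
qed

lemma psi_norm:
  assumes v: "v \<in> up_fam"
  shows "dual_norm (Psi v) = quot_norm U v"
proof -
  obtain Kv where Kv: "\<And>\<alpha>. pt_rep (v \<alpha>)" "\<And>\<alpha>. pt_norm (v \<alpha>) \<le> Kv" "\<And>\<alpha>. 0 \<le> pt_norm (v \<alpha>)"
    using up_fam_bound[OF v] by blast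
  define Q where "Q = (\<lambda>w. up_norm U (\<lambda>\<alpha> p. v \<alpha> p - w \<alpha> p)) ` W0 U"
  have qn: "quot_norm U v = Inf Q" unfolding quot_norm_def Q_def ..
  have W0up: "w \<in> up_fam" if "w \<in> W0 U" for w using that unfolding W0_def by blast
  have Qne: "Q \<noteq> {}" unfolding Q_def using zero_W0 by blast
  have Qbdd: "bdd_below Q" unfolding Q_def
    by (rule bdd_belowI2[of _ 0]) (use up_norm_tendsto(2)[OF v W0up] in blast)
  have le1: "dual_norm (Psi v) \<le> up_norm U (\<lambda>\<alpha> p. v \<alpha> p - w \<alpha> p)" if w: "w \<in> W0 U" for w
    unfolding dual_norm_def
  proof (rule cSUP_least)
    show "approximable \<inter> {T. norm T \<le> 1} \<noteq> {}" using approx_zero by fastforce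
    fix T :: "'e \<Rightarrow>\<^sub>L 'x" assume T: "T \<in> approximable \<inter> {T. norm T \<le> 1}"
    have wu: "w \<in> up_fam" by (rule W0up[OF w])
    obtain Kw where Kw: "\<And>\<alpha>. pt_rep (w \<alpha>)" "\<And>\<alpha>. pt_norm (w \<alpha>) \<le> Kw"
      using up_fam_bound[OF wu] by blast
    have w0: "((\<lambda>\<alpha>. pt_apply (w \<alpha>) T) \<longlongrightarrow> 0) U" using w T unfolding W0_def by blast
    have "((\<lambda>\<alpha>. pt_apply (v \<alpha>) T - pt_apply (w \<alpha>) T) \<longlongrightarrow> Psi v T - 0) U"
      by (intro tendsto_intros psi_tendsto v w0) (use T in blast)
    then have l1: "((\<lambda>\<alpha>. \<bar>pt_apply (\<lambda>p. v \<alpha> p - w \<alpha> p) T\<bar>) \<longlongrightarrow> \<bar>Psi v T\<bar>) U"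
      using pt_apply_diff[OF Kv(1) Kw(1)] by (simp add: tendsto_rabs)
    have evb: "eventually (\<lambda>\<alpha>. \<bar>pt_apply (\<lambda>p. v \<alpha> p - w \<alpha> p) T\<bar> \<le> pt_norm (\<lambda>p. v \<alpha> p - w \<alpha> p)) U"
    proof (rule always_eventually, rule allI)
      fix \<alpha>
      have r: "pt_rep (\<lambda>p. v \<alpha> p - w \<alpha> p)" using pt_rep_diff Kv(1) Kw(1) by blast
      have "\<bar>pt_apply (\<lambda>p. v \<alpha> p - w \<alpha> p) T\<bar> \<le> pt_norm (\<lambda>p. v \<alpha> p - w \<alpha> p) * norm T"
        by (rule pt_apply_bound[OF r])
      also have "\<dots> \<le> pt_norm (\<lambda>p. v \<alpha> p - w \<alpha> p)"
        using T pt_norm_nonneg[OF r] by (simp add: mult_left_le)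
      finally show "\<bar>pt_apply (\<lambda>p. v \<alpha> p - w \<alpha> p) T\<bar> \<le> pt_norm (\<lambda>p. v \<alpha> p - w \<alpha> p)" .
    qed
    show "\<bar>Psi v T\<bar> \<le> up_norm U (\<lambda>\<alpha> p. v \<alpha> p - w \<alpha> p)"
      by (rule tendsto_le[OF _ up_norm_tendsto(1)[OF v wu] l1 evb]) (rule Ubot)
  qed
  have A: "dual_norm (Psi v) \<le> Inf Q"
    using Qne by (rule cInf_greatest) (use le1 Q_def in blast)
  define r where "r = dual_norm (Psi v)"
  obtain u where u: "\<And>\<alpha>. pt_rep (u \<alpha>)" "\<And>\<alpha>. pt_norm (u \<alpha>) \<le> r + 1"
    "\<And>T. T \<in> approximable \<Longrightarrow> ((\<lambda>\<alpha>. pt_apply (u \<alpha>) T) \<longlongrightarrow> Psi v T) U"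
    "\<And>\<delta>. \<delta> > 0 \<Longrightarrow> eventually (\<lambda>\<alpha>. pt_norm (u \<alpha>) \<le> r + \<delta>) U"
    using fam_exists[OF psi_dual[OF v]] unfolding r_def by blast
  define w where "w = (\<lambda>\<alpha> p. v \<alpha> p - u \<alpha> p)"
  have wrep: "pt_rep (w \<alpha>)" for \<alpha> unfolding w_def using pt_rep_diff Kv(1) u(1) by blast
  have wb: "pt_norm (w \<alpha>) \<le> Kv + (r + 1)" for \<alpha>
    unfolding w_def using pt_norm_diff[OF Kv(1) u(1), of \<alpha> \<alpha>] Kv(2)[of \<alpha>] u(2)[of \<alpha>] by simp
  have wu: "w \<in> up_fam" by (rule up_famI[OF wrep wb])
  have wW: "w \<in> W0 U" unfolding W0_def
  proof (intro CollectI conjI ballI wu)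
    fix T :: "'e \<Rightarrow>\<^sub>L 'x" assume T: "T \<in> approximable"
    have "((\<lambda>\<alpha>. pt_apply (v \<alpha>) T - pt_apply (u \<alpha>) T) \<longlongrightarrow> Psi v T - Psi v T) U"
      by (intro tendsto_intros psi_tendsto v u(3) T)
    then show "((\<lambda>\<alpha>. pt_apply (w \<alpha>) T) \<longlongrightarrow> 0) U"
      unfolding w_def using pt_apply_diff[OF Kv(1) u(1)] by simp
  qed
  have vw: "(\<lambda>\<alpha> p. v \<alpha> p - w \<alpha> p) = u" unfolding w_def by simp
  have uu: "u \<in> up_fam" by (rule up_famI[OF u(1) u(2)])
  have nnu: "\<bar>pt_norm (u \<alpha>)\<bar> \<le> r + 1" for \<alpha> using u(2)[of \<alpha>] pt_norm_nonneg[OF u(1)[of \<alpha>]] by simp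
  have tu: "((\<lambda>\<alpha>. pt_norm (u \<alpha>)) \<longlongrightarrow> up_norm U u) U"
    unfolding up_norm_def by (rule ultra_lim[OF U nnu])
  have "up_norm U u \<le> r"
  proof (rule field_le_epsilon)
    fix e :: real assume e: "e > 0"
    show "up_norm U u \<le> r + e" by (rule tendsto_upperbound[OF tu u(4)[OF e]]) (rule Ubot)
  qed
  moreover have "Inf Q \<le> up_norm U u"
  proof -
    have "up_norm U u \<in> Q" unfolding Q_def using wW vw by force
    then show ?thesis using Qbdd by (rule cInf_lower)
  qed
  ultimately have "Inf Q \<le> r" by simp
  then show ?thesis using A qn r_def by simp
qed

lemma psi_qiso: "\<exists>\<Psi> :: ('i \<Rightarrow> ('e, 'x) ptens) \<Rightarrow> ('e \<Rightarrow>\<^sub>L 'x) \<Rightarrow> real. quot_iso_dual U \<Psi>"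
proof (intro exI)
  show "quot_iso_dual U Psi" unfolding quot_iso_dual_def
    using psi_lin psi_onto psi_ker psi_norm by blast
qed

end


theorem corollary2p3:
  fixes E_witness :: "'e::banach itself" and X_witness :: "'x::banach itself"
  shows "\<exists>(U :: ('e, 'x) idx filter) (\<Psi> :: _ \<Rightarrow> ('e \<Rightarrow>\<^sub>L 'x) \<Rightarrow> real).
           ultrafilter U \<and> quot_iso_dual U \<Psi>"
proof -
  define enc :: "('e \<Rightarrow>\<^sub>L 'x) set \<times> nat \<Rightarrow> ('e, 'x) idx" where
    "enc x = {{Inl (\<lambda>T. if T \<in> fst x then 1 else 0)}, {Inr (Inl (\<lambda>_. real (snd x)))}}" for x
  have inj: "inj enc"
  proof (rule injI)
    fix x y assume h: "enc x = enc y"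
    have a: "(\<lambda>T. if T \<in> fst x then 1 else 0 :: real) = (\<lambda>T. if T \<in> fst y then 1 else 0)"
      using h unfolding enc_def by (auto simp: doubleton_eq_iff)
    have b: "real (snd x) = real (snd y)"
      using h unfolding enc_def by (auto simp: doubleton_eq_iff fun_eq_iff)
    have "fst x = fst y"
    proof
      show "fst x \<subseteq> fst y" using a by (auto simp: fun_eq_iff split: if_splits)
      show "fst y \<subseteq> fst x" using a by (auto simp: fun_eq_iff split: if_splits)
    qed
    moreover have "snd x = snd y" using b by simp
    ultimately show "x = y" by (simp add: prod_eq_iff)
  qed
  define F0 where "F0 = finite_subsets_at_top (UNIV :: ('e \<Rightarrow>\<^sub>L 'x) set) \<times>\<^sub>F sequentially"
  have F0: "F0 \<noteq> bot" unfolding F0_def prod_filter_eq_bot by simp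
  have "filtermap enc F0 \<noteq> bot" using F0 filtermap_bot_iff by blast
  then obtain U where U: "ultrafilter U" and UF: "U \<le> filtermap enc F0" using ultra_exists by blast
  define Fa where "Fa \<alpha> = (if finite (fst (inv enc \<alpha>)) then fst (inv enc \<alpha>) else {})" for \<alpha>
  define Na where "Na \<alpha> = snd (inv enc \<alpha>)" for \<alpha>
  have Fafin: "finite (Fa \<alpha>)" for \<alpha> unfolding Fa_def by simp
  have ev: "eventually (\<lambda>\<alpha>. T \<in> Fa \<alpha> \<and> N \<le> Na \<alpha>) U" for T N
  proof -
    have e1: "eventually (\<lambda>F. finite F \<and> T \<in> F) (finite_subsets_at_top (UNIV :: ('e \<Rightarrow>\<^sub>L 'x) set))"
      unfolding eventually_finite_subsets_at_top by (intro exI[of _ "{T}"]) auto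
    have e2: "eventually (\<lambda>n. N \<le> n) sequentially" by (rule eventually_ge_at_top)
    have "eventually (\<lambda>x. finite (fst x) \<and> T \<in> fst x \<and> N \<le> snd x) F0"
      unfolding F0_def eventually_prod_filter
      by (intro exI[of _ "\<lambda>F. finite F \<and> T \<in> F"] exI[of _ "\<lambda>n. N \<le> n"] conjI e1 e2) auto
    then have "eventually (\<lambda>x. T \<in> Fa (enc x) \<and> N \<le> Na (enc x)) F0"
      by (rule eventually_mono) (simp add: Fa_def Na_def inv_f_f[OF inj])
    then have "eventually (\<lambda>\<alpha>. T \<in> Fa \<alpha> \<and> N \<le> Na \<alpha>) (filtermap enc F0)"
      by (simp add: eventually_filtermap)
    then show ?thesis by (rule filter_leD[OF UF])
  qed
  obtain \<Psi> :: "(('e, 'x) idx \<Rightarrow> ('e, 'x) ptens) \<Rightarrow> ('e \<Rightarrow>\<^sub>L 'x) \<Rightarrow> real"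
    where "quot_iso_dual U \<Psi>" using psi_qiso[OF U Fafin ev] by (elim exE)
  then show ?thesis using U by (intro exI conjI)
qed


end
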